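(* In the model described in the context, for every $s\ge0$ and $z\in\mathbb{R}^2$ the inter-cluster interference $I_b$ satisfies $$\mathbb{E}\big[e^{-sI_b}\big]=\exp\Big(-\lambda_{\text{pb}}\int_{\mathbb{R}^2}\big(1-e^{-\bar cD\,q(s,y,z)}\big)\,dy\Big),$$ where $$q(s,y,z)=\int_{\mathbb{O}}\frac{s\beta\eta g}{s\beta\eta g+|x|^{\alpha_1}|x+y-z|^{\alpha_2}}\,f(|x|)\,dx,\qquad \mathbb{O}=\Big\{x\in\mathbb{R}^2:\ |x|\le\Big(\frac{\eta g(1-\beta D)}{P_c}\Big)^{1/\alpha_1}\Big\}.$$
   Context: Parameters: power-beacon density $\lambda_{\text{pb}}>0$, $\bar c>0$, duty cycle $D\in(0,1]$, reflection coefficient $\beta\in(0,1]$, $\eta>0$, $g>0$, circuit power $P_c>0$, path-loss exponents $\alpha_1,\alpha_2>0$. The function $f$ is one of: (Matern) $f(r)=\frac{1}{\pi a^2}$ for $0\le r\le a$, $0$ otherwise ($a>0$); (Thomas) $f(r)=\frac{1}{2\pi\sigma^2}e^{-r^2/(2\sigma^2)}$ ($\sigma>0$); $x\mapsto f(|x|)$ is a probability density on $\mathbb{R}^2$. Define $\ell(P)=P$ if $P\ge P_c/(1-\beta D)$ and $\ell(P)=0$ otherwise. Model: the power beacons (other than the one serving the typical node) form a homogeneous Poisson point process $\Pi'$ of density $\lambda_{\text{pb}}$ on $\mathbb{R}^2$; each $Y\in\Pi'$ carries an independent cluster $\mathcal{N}_Y$ of active backscatter nodes, a Poisson point process with intensity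 measure $\bar cDf(|x-Y|)\,dx$. Fading variables $h_X$ are i.i.d. exponential with mean 1, independent of everything else. For a receiver at $z$, the inter-cluster interference is $I_b=\sum_{Y\in\Pi'}\sum_{X\in\mathcal{N}_Y}\beta\,\ell(\eta g|X-Y|^{-\alpha_1})h_X|X-z|^{-\alpha_2}$. *)

theory Defs
  imports "HOL-Probability.Probability"
begin

definition is_PPP :: "'w measure \<Rightarrow> ('w \<Rightarrow> 'a set) \<Rightarrow> 'a measure \<Rightarrow> bool" where
  "is_PPP M Phi mu \<longleftrightarrow>
     (\<forall>B \<in> sets mu. emeasure mu B < \<infinity> \<longrightarrow>
        (\<lambda>w. card (Phi w \<inter> B)) \<in> measurable M (count_space UNIV) \<and>
        (AE w in M. finite (Phi w \<inter> B)) \<and>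
        (\<forall>n::nat. measure M {w \<in> space M. card (Phi w \<inter> B) = n}
                 = (measure mu B) ^ n / fact n * exp (- measure mu B))) \<and>
     (\<forall>(I::nat set) B. finite I \<longrightarrow> disjoint_family_on B I \<longrightarrow>
        (\<forall>i\<in>I. B i \<in> sets mu \<and> emeasure mu (B i) < \<infinity>) \<longrightarrow>
        prob_space.indep_vars M (\<lambda>_. count_space UNIV) (\<lambda>i w. card (Phi w \<inter> B i)) I)"

definition matern_f :: "real \<Rightarrow> real \<Rightarrow> real" where
  "matern_f a r = (if 0 \<le> r \<and> r \<le> a then 1 / (pi * a\<^sup>2) else 0)"

definition thomas_f :: "real \<Rightarrow> real \<Rightarrow> real" where
  "thomas_f \<sigma> r = 1 / (2 * pi * \<sigma>\<^sup>2) * exp (- r\<^sup>2 / (2 * \<sigma>\<^sup>2))"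

text \<open>Harvested power after the activation threshold: ell(P) = P if P >= Pc/(1 - beta D),
  else 0.  When beta D = 1 the threshold is +infinity, so ell = 0.\<close>
definition ell :: "real \<Rightarrow> real \<Rightarrow> real \<Rightarrow> real \<Rightarrow> real" where
  "ell Pc \<beta> D P = (if \<beta> * D < 1 \<and> P \<ge> Pc / (1 - \<beta> * D) then P else 0)"

definition enn_exp_neg :: "ennreal \<Rightarrow> ennreal" where
  "enn_exp_neg x = (if x = \<infinity> then 0 else ennreal (exp (- enn2real x)))"

definition regionO :: "real \<Rightarrow> real \<Rightarrow> real \<Rightarrow> real \<Rightarrow> real \<Rightarrow> real \<Rightarrow> (real^2) set" where
  "regionO \<eta> g \<beta> D Pc \<alpha>1 =
     {x. norm x \<le> (\<eta> * g * (1 - \<beta> * D) / Pc) powr (1 / \<alpha>1)}"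

definition qfun :: "real \<Rightarrow> real \<Rightarrow> real \<Rightarrow> real \<Rightarrow> real \<Rightarrow> real \<Rightarrow> real
                    \<Rightarrow> (real \<Rightarrow> real) \<Rightarrow> real \<Rightarrow> real^2 \<Rightarrow> real^2 \<Rightarrow> real" where
  "qfun \<eta> g \<beta> D Pc \<alpha>1 \<alpha>2 f s y z =
     (\<integral>x \<in> regionO \<eta> g \<beta> D Pc \<alpha>1.
        (s * \<beta> * \<eta> * g / (s * \<beta> * \<eta> * g + norm x powr \<alpha>1 * norm (x + y - z) powr \<alpha>2))
          * f (norm x) \<partial>lborel)"

text \<open>Index type for the independent components of the model: the parent process,
  the k-th cluster, and the fading variable of the j-th node of the k-th cluster.\<close>
datatype model_idx = Par | Clu nat | Fad nat nat

end

theory Submission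
  imports Defs
begin
lemma eexp_ennreal: "0 \<le> r \<Longrightarrow> enn_exp_neg (ennreal r) = ennreal (exp (- r))"
  by (simp add: enn_exp_neg_def)

lemma eexp_top[simp]: "enn_exp_neg \<infinity> = 0"
  by (simp add: enn_exp_neg_def)

lemma eexp_top'[simp]: "enn_exp_neg top = 0"
  by (simp add: enn_exp_neg_def)

lemma eexp_0[simp]: "enn_exp_neg 0 = 1"
  by (simp add: enn_exp_neg_def)

lemma eexp_add: "enn_exp_neg (a + b) = enn_exp_neg a * enn_exp_neg b"
proof (cases "a = \<infinity> \<or> b = \<infinity>")
  case True then show ?thesis by (auto simp: enn_exp_neg_def)
next
  case False
  then obtain x y where "a = ennreal x" "b = ennreal y" "0 \<le> x" "0 \<le> y"
    by (cases a; cases b) auto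
  then show ?thesis
    by (simp add: eexp_ennreal ennreal_plus[symmetric] exp_diff exp_minus field_simps ennreal_mult[symmetric] del: ennreal_plus)
qed

lemma eexp_sum: "enn_exp_neg (\<Sum>i\<in>I. f i) = (\<Prod>i\<in>I. enn_exp_neg (f i))"
  by (induction I rule: infinite_finite_induct) (auto simp: eexp_add)

lemma eexp_le1: "enn_exp_neg x \<le> 1"
  by (auto simp: enn_exp_neg_def)

lemma eexp_fin: "enn_exp_neg x < \<infinity>"
  using eexp_le1[of x] by (simp add: order_le_less_trans)


lemma eexp_measurable[measurable]: "enn_exp_neg \<in> borel_measurable borel"
  unfolding enn_exp_neg_def by measurable

lemma eexp_antimono: "a \<le> b \<Longrightarrow> enn_exp_neg b \<le> enn_exp_neg a"
proof (cases "b = \<infinity>")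
  case True then show ?thesis by simp
next
  case False
  assume ab: "a \<le> b"
  with False have "a \<noteq> \<infinity>" by (auto simp: top_unique)
  then obtain x y where "a = ennreal x" "b = ennreal y" "0 \<le> x" "0 \<le> y"
    using False by (cases a; cases b) auto
  with ab show ?thesis by (simp add: eexp_ennreal ennreal_le_iff)
qed

lemma eexp_SUP:
  assumes inc: "incseq f"
  shows "enn_exp_neg (SUP i. f i) = (INF i. enn_exp_neg (f i))"
proof (rule antisym)
  show "enn_exp_neg (SUP i. f i) \<le> (INF i. enn_exp_neg (f i))"
    by (intro INF_greatest eexp_antimono SUP_upper) auto
next
  let ?L = "SUP i. f i"
  show "(INF i. enn_exp_neg (f i)) \<le> enn_exp_neg ?L"
  proof (cases "?L = \<infinity>")
    case True
    show ?thesis unfolding True eexp_top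
    proof (rule ennreal_le_epsilon)
      fix e :: real assume e: "0 < e"
      define n where "n = max 0 (- ln e)"
      have "ennreal n < ?L" unfolding True infinity_ennreal_def by (rule ennreal_less_top)
      then obtain i where i: "ennreal n < f i" by (auto simp: less_SUP_iff)
      have "(INF i. enn_exp_neg (f i)) \<le> enn_exp_neg (f i)" by (rule INF_lower) auto
      also have "\<dots> \<le> enn_exp_neg (ennreal n)" using i by (intro eexp_antimono) auto
      also have "\<dots> = ennreal (exp (- n))" by (rule eexp_ennreal) (simp add: n_def)
      also have "\<dots> \<le> ennreal e"
      proof -
        have "exp (- n) \<le> exp (ln e)" unfolding n_def by auto
        then show ?thesis using e by (simp add: ennreal_leI)
      qed
      finally show "(INF i. enn_exp_neg (f i)) \<le> 0 + ennreal e" by simp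
    qed
  next
    case False
    have fin: "f i \<noteq> \<infinity>" for i
      using False SUP_upper[of i UNIV f] by (metis UNIV_I infinity_ennreal_def top_unique)
    have lim1: "f \<longlonglongrightarrow> ?L" by (rule LIMSEQ_SUP[OF inc])
    have lim2: "(\<lambda>i. enn2real (f i)) \<longlonglongrightarrow> enn2real ?L"
    proof -
      obtain r where r: "?L = ennreal r" "0 \<le> r" using False by (cases ?L) (auto simp: infinity_ennreal_def)
      show ?thesis using lim1 unfolding r by (intro tendsto_enn2real) (auto simp: r)
    qed
    have "(\<lambda>i. ennreal (exp (- enn2real (f i)))) \<longlonglongrightarrow> ennreal (exp (- enn2real ?L))"
      by (intro tendsto_ennrealI tendsto_intros lim2)
    moreover have "(\<lambda>i. ennreal (exp (- enn2real (f i)))) = (\<lambda>i. enn_exp_neg (f i))"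
      using fin by (auto simp: enn_exp_neg_def)
    moreover have "ennreal (exp (- enn2real ?L)) = enn_exp_neg ?L"
      using False by (simp add: enn_exp_neg_def)
    ultimately have lim3: "(\<lambda>i. enn_exp_neg (f i)) \<longlonglongrightarrow> enn_exp_neg ?L" by simp
    have dec: "decseq (\<lambda>i. enn_exp_neg (f i))"
      using inc by (auto simp: decseq_def incseq_def intro: eexp_antimono)
    have "(\<lambda>i. enn_exp_neg (f i)) \<longlonglongrightarrow> (INF i. enn_exp_neg (f i))"
      by (rule LIMSEQ_INF[OF dec])
    with lim3 show ?thesis using LIMSEQ_unique by (metis order_refl)
  qed
qed

lemma poisson_laplace:
  fixes N :: "'w \<Rightarrow> nat"
  assumes M: "prob_space M"
    and N: "N \<in> measurable M (count_space UNIV)"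
    and m: "0 \<le> m" and a: "0 \<le> a"
    and law: "\<And>n. measure M {w \<in> space M. N w = n} = m ^ n / fact n * exp (- m)"
  shows "(\<integral>\<^sup>+ w. ennreal (exp (- (a * real (N w)))) \<partial>M) = ennreal (exp (- (m * (1 - exp (- a)))))"
proof -
  interpret prob_space M by fact
  let ?F = "\<lambda>n::nat. ennreal (exp (- (a * real n)))"
  let ?A = "\<lambda>n. {w \<in> space M. N w = n}"
  have A: "?A n \<in> sets M" for n
    using N by measurable
  have "(\<integral>\<^sup>+ w. ?F (N w) \<partial>M) = (\<integral>\<^sup>+ w. (\<Sum>n. ?F n * indicator (?A n) w) \<partial>M)"
  proof (rule nn_integral_cong)
    fix w assume w: "w \<in> space M"
    have "(\<lambda>n. ?F n * indicator (?A n) w) = (\<lambda>n. if n = N w then ?F n else 0)"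
      using w by (auto simp: indicator_def)
    then show "?F (N w) = (\<Sum>n. ?F n * indicator (?A n) w)"
      using sums_single[of "N w" ?F] by (simp add: sums_iff)
  qed
  also have "\<dots> = (\<Sum>n. \<integral>\<^sup>+ w. ?F n * indicator (?A n) w \<partial>M)"
    by (rule nn_integral_suminf) (use A in auto)
  also have "\<dots> = (\<Sum>n. ennreal (exp (- m) * ((m * exp (- a)) ^ n / fact n)))"
  proof (rule suminf_cong)
    fix n
    have "(\<integral>\<^sup>+ w. ?F n * indicator (?A n) w \<partial>M) = ?F n * emeasure M (?A n)"
      using A by (simp add: nn_integral_cmult_indicator)
    also have "\<dots> = ennreal (exp (- (a * real n)) * (m ^ n / fact n * exp (- m)))"
      by (simp add: emeasure_eq_measure law ennreal_mult[symmetric] m)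
    also have "exp (- (a * real n)) * (m ^ n / fact n * exp (- m)) = exp (- m) * ((m * exp (- a)) ^ n / fact n)"
      by (simp add: power_mult_distrib exp_of_nat_mult[symmetric] exp_minus field_simps mult.commute)
    finally show "(\<integral>\<^sup>+ w. ?F n * indicator (?A n) w \<partial>M) = ennreal (exp (- m) * ((m * exp (- a)) ^ n / fact n))" .
  qed
  also have "\<dots> = ennreal (exp (- m) * exp (m * exp (- a)))"
  proof (rule suminf_ennreal_eq)
    show "\<And>n. 0 \<le> exp (- m) * ((m * exp (- a)) ^ n / fact n)" using m by simp
    show "(\<lambda>n. exp (- m) * ((m * exp (- a)) ^ n / fact n)) sums (exp (- m) * exp (m * exp (- a)))"
      using sums_mult[OF exp_converges[of "m * exp (- a)"], of "exp (- m)"]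
      by (simp add: divide_inverse scaleR_conv_of_real mult.commute)
  qed
  also have "exp (- m) * exp (m * exp (- a)) = exp (- (m * (1 - exp (- a))))"
    by (simp add: exp_add[symmetric] algebra_simps)
  finally show ?thesis .
qed

lemma sum_indicator_delta:
  fixes g :: "'a \<Rightarrow> ennreal" and c :: "ennreal \<Rightarrow> ennreal"
  assumes fin: "finite V" and V: "V = g ` UNIV - {0}" and c0: "c 0 = 0"
  shows "(\<Sum>v\<in>V. c v * indicator (g -` {v}) x) = c (g x)"
proof -
  have "(\<Sum>v\<in>V. c v * indicator (g -` {v}) x) = (\<Sum>v\<in>V. if g x = v then c v else 0)"
    by (intro sum.cong) (auto simp: indicator_def)
  also have "\<dots> = (if g x \<in> V then c (g x) else 0)"
    using fin by (simp add: sum.delta)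
  also have "\<dots> = c (g x)" using V c0 by auto
  finally show ?thesis .
qed

lemma meas_card_comp:
  assumes "h \<in> measurable M (count_space UNIV)"
  shows "(\<lambda>w. F (h w) :: ennreal) \<in> borel_measurable M"
  using measurable_compose[OF assms, of F borel] by simp

lemma pgfl_simple:
  fixes mu :: "'a measure" and Phi :: "'w \<Rightarrow> 'a set" and g :: "'a \<Rightarrow> ennreal"
  assumes M: "prob_space M" and PPP: "is_PPP M Phi mu" and sp: "space mu = UNIV"
    and g: "simple_function mu g" and gfin: "\<And>x. g x < top"
    and F: "F \<in> sets mu" "emeasure mu F < \<infinity>" "\<And>x. x \<notin> F \<Longrightarrow> g x = 0"
  defines "V \<equiv> g ` UNIV - {0}"
  shows "AE w in M. (\<integral>\<^sup>+x. g x * indicator (Phi w) x \<partial>count_space UNIV)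
                 = (\<Sum>v\<in>V. v * of_nat (card (Phi w \<inter> g -` {v})))"
    and "(\<lambda>w. \<Sum>v\<in>V. v * of_nat (card (Phi w \<inter> g -` {v}))) \<in> borel_measurable M"
    and "(\<integral>\<^sup>+ w. enn_exp_neg (\<Sum>v\<in>V. v * of_nat (card (Phi w \<inter> g -` {v}))) \<partial>M)
          = enn_exp_neg (\<integral>\<^sup>+x. (1 - enn_exp_neg (g x)) \<partial>mu)"
proof -
  interpret prob_space M by fact
  have Veq: "V = g ` UNIV - {0}" unfolding V_def ..
  have finV: "finite V" using g sp unfolding V_def simple_function_def by auto
  have Bsets: "g -` {v} \<in> sets mu" for v
    using simple_functionD(2)[OF g, of "{v}"] sp by simp
  have Bsub: "g -` {v} \<subseteq> F" if "v \<in> V" for v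
    using that F(3) unfolding V_def by auto
  have Bfin: "emeasure mu (g -` {v}) < \<infinity>" if "v \<in> V" for v
    using emeasure_mono[OF Bsub[OF that] F(1)] F(2) by (auto simp: le_less_trans)
  have cardmeas: "(\<lambda>w. card (Phi w \<inter> g -` {v})) \<in> measurable M (count_space UNIV)" if "v \<in> V" for v
    using PPP Bsets Bfin[OF that] unfolding is_PPP_def by blast
  have AEfin: "AE w in M. finite (Phi w \<inter> g -` {v})" if "v \<in> V" for v
    using PPP Bsets Bfin[OF that] unfolding is_PPP_def by blast
  have law: "measure M {w \<in> space M. card (Phi w \<inter> g -` {v}) = n}
       = (measure mu (g -` {v})) ^ n / fact n * exp (- measure mu (g -` {v}))" if "v \<in> V" for v n
    using PPP Bsets Bfin[OF that] unfolding is_PPP_def by blast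
  show "AE w in M. (\<integral>\<^sup>+x. g x * indicator (Phi w) x \<partial>count_space UNIV)
                 = (\<Sum>v\<in>V. v * of_nat (card (Phi w \<inter> g -` {v})))"
  proof -
    have "AE w in M. \<forall>v\<in>V. finite (Phi w \<inter> g -` {v})"
      by (rule AE_finite_allI[OF finV]) (rule AEfin)
    then show ?thesis
    proof (rule AE_mp, intro AE_I2 impI)
      fix w assume fw: "\<forall>v\<in>V. finite (Phi w \<inter> g -` {v})"
      have "(\<integral>\<^sup>+x. g x * indicator (Phi w) x \<partial>count_space UNIV)
          = (\<integral>\<^sup>+x. (\<Sum>v\<in>V. v * indicator (Phi w \<inter> g -` {v}) x) \<partial>count_space UNIV)"
      proof (rule nn_integral_cong)
        fix x
        have "(\<Sum>v\<in>V. v * indicator (Phi w \<inter> g -` {v}) x)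
            = (\<Sum>v\<in>V. (v * indicator (Phi w) x) * indicator (g -` {v}) x)"
          by (intro sum.cong) (auto simp: indicator_def)
        also have "\<dots> = g x * indicator (Phi w) x"
          by (rule sum_indicator_delta[OF finV Veq, of "\<lambda>v. v * indicator (Phi w) x"]) simp
        finally show "g x * indicator (Phi w) x = (\<Sum>v\<in>V. v * indicator (Phi w \<inter> g -` {v}) x)" by simp
      qed
      also have "\<dots> = (\<Sum>v\<in>V. \<integral>\<^sup>+x. v * indicator (Phi w \<inter> g -` {v}) x \<partial>count_space UNIV)"
        by (rule nn_integral_sum) auto
      also have "\<dots> = (\<Sum>v\<in>V. v * of_nat (card (Phi w \<inter> g -` {v})))"
        using fw by (intro sum.cong) (auto simp: nn_integral_cmult_indicator)
      finally show "(\<integral>\<^sup>+x. g x * indicator (Phi w) x \<partial>count_space UNIV)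
                 = (\<Sum>v\<in>V. v * of_nat (card (Phi w \<inter> g -` {v})))" .
    qed
  qed
  show meas: "(\<lambda>w. \<Sum>v\<in>V. v * of_nat (card (Phi w \<inter> g -` {v}))) \<in> borel_measurable M"
    by (intro borel_measurable_sum meas_card_comp[OF cardmeas, of _ "\<lambda>k. _ * of_nat k"])
  obtain phi where phi: "bij_betw phi {0..<card V} V"
    using ex_bij_betw_nat_finite[OF finV] by blast
  define n where "n = card V"
  define B where "B i = g -` {phi i}" for i
  have phiV: "phi i \<in> V" if "i < n" for i
    using phi that unfolding n_def bij_betw_def by auto
  have disj: "disjoint_family_on B {0..<n}"
    unfolding disjoint_family_on_def B_def
    using phi unfolding n_def bij_betw_def inj_on_def by auto
  have indep0: "indep_vars (\<lambda>_. count_space UNIV) (\<lambda>i w. card (Phi w \<inter> B i)) {0..<n}"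
    using PPP disj Bsets Bfin phiV unfolding is_PPP_def B_def by auto
  define a where "a i = enn2real (phi i)" for i
  define m where "m i = measure mu (B i)" for i
  have phia: "phi i = ennreal (a i)" if "i < n" for i
    using gfin phiV[OF that] unfolding a_def V_def by (auto simp: less_top)
  have a0: "0 \<le> a i" for i unfolding a_def by simp
  have eq1: "enn_exp_neg (phi i * of_nat k) = ennreal (exp (- (a i * real k)))" if "i < n" for i k
    by (simp add: phia[OF that] eexp_ennreal a0 ennreal_of_nat_eq_real_of_nat ennreal_mult[symmetric])
  have indep: "indep_vars (\<lambda>_. borel) (\<lambda>i w. enn_exp_neg (phi i * of_nat (card (Phi w \<inter> B i)))) {0..<n}"
    by (rule indep_vars_compose2[OF indep0, of "\<lambda>i k. enn_exp_neg (phi i * of_nat k)"]) simp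
  have "(\<integral>\<^sup>+ w. enn_exp_neg (\<Sum>v\<in>V. v * of_nat (card (Phi w \<inter> g -` {v}))) \<partial>M)
      = (\<integral>\<^sup>+ w. (\<Prod>i\<in>{0..<n}. enn_exp_neg (phi i * of_nat (card (Phi w \<inter> B i)))) \<partial>M)"
  proof (rule nn_integral_cong)
    fix w
    have "(\<Prod>i\<in>{0..<n}. enn_exp_neg (phi i * of_nat (card (Phi w \<inter> B i))))
        = (\<Prod>v\<in>V. enn_exp_neg (v * of_nat (card (Phi w \<inter> g -` {v}))))"
      unfolding B_def n_def
      by (rule prod.reindex_bij_betw[OF phi, of "\<lambda>v. enn_exp_neg (v * of_nat (card (Phi w \<inter> g -` {v})))"])
    then show "enn_exp_neg (\<Sum>v\<in>V. v * of_nat (card (Phi w \<inter> g -` {v})))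
      = (\<Prod>i\<in>{0..<n}. enn_exp_neg (phi i * of_nat (card (Phi w \<inter> B i))))"
      by (simp add: eexp_sum)
  qed
  also have "\<dots> = (\<Prod>i\<in>{0..<n}. \<integral>\<^sup>+ w. enn_exp_neg (phi i * of_nat (card (Phi w \<inter> B i))) \<partial>M)"
    by (rule indep_vars_nn_integral[OF _ indep]) auto
  also have "\<dots> = (\<Prod>i\<in>{0..<n}. ennreal (exp (- (m i * (1 - exp (- a i))))))"
  proof (rule prod.cong[OF refl])
    fix i assume i: "i \<in> {0..<n}"
    then have i': "i < n" by simp
    have "(\<integral>\<^sup>+ w. enn_exp_neg (phi i * of_nat (card (Phi w \<inter> B i))) \<partial>M)
        = (\<integral>\<^sup>+ w. ennreal (exp (- (a i * real (card (Phi w \<inter> B i))))) \<partial>M)"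
      using eq1[OF i'] by simp
    also have "\<dots> = ennreal (exp (- (m i * (1 - exp (- a i)))))"
      unfolding m_def B_def
      by (rule poisson_laplace[OF M cardmeas[OF phiV[OF i']] _ a0 law[OF phiV[OF i']]]) simp
    finally show "(\<integral>\<^sup>+ w. enn_exp_neg (phi i * of_nat (card (Phi w \<inter> B i))) \<partial>M)
        = ennreal (exp (- (m i * (1 - exp (- a i)))))" .
  qed
  also have "\<dots> = enn_exp_neg (\<Sum>i\<in>{0..<n}. ennreal (m i * (1 - exp (- a i))))"
    unfolding eexp_sum by (intro prod.cong refl) (simp add: eexp_ennreal a0 m_def)
  also have "(\<Sum>i\<in>{0..<n}. ennreal (m i * (1 - exp (- a i)))) = (\<integral>\<^sup>+x. (1 - enn_exp_neg (g x)) \<partial>mu)"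
  proof -
    have "(\<integral>\<^sup>+x. (1 - enn_exp_neg (g x)) \<partial>mu) = (\<integral>\<^sup>+x. (\<Sum>v\<in>V. (1 - enn_exp_neg v) * indicator (g -` {v}) x) \<partial>mu)"
      by (intro nn_integral_cong sum_indicator_delta[OF finV Veq, symmetric]) simp
    also have "\<dots> = (\<Sum>v\<in>V. \<integral>\<^sup>+x. (1 - enn_exp_neg v) * indicator (g -` {v}) x \<partial>mu)"
      by (rule nn_integral_sum) (use Bsets in auto)
    also have "\<dots> = (\<Sum>v\<in>V. (1 - enn_exp_neg v) * emeasure mu (g -` {v}))"
      by (intro sum.cong refl nn_integral_cmult_indicator Bsets)
    also have "\<dots> = (\<Sum>i\<in>{0..<n}. (1 - enn_exp_neg (phi i)) * emeasure mu (B i))"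
      unfolding B_def n_def
      by (rule sum.reindex_bij_betw[OF phi, symmetric])
    also have "\<dots> = (\<Sum>i\<in>{0..<n}. ennreal (m i * (1 - exp (- a i))))"
    proof (rule sum.cong[OF refl])
      fix i assume "i \<in> {0..<n}"
      then have i': "i < n" by simp
      have "emeasure mu (B i) = ennreal (m i)"
        using Bfin[OF phiV[OF i']] unfolding m_def B_def by (simp add: emeasure_eq_ennreal_measure less_top)
      moreover have "1 - enn_exp_neg (phi i) = ennreal (1 - exp (- a i))"
        using a0[of i] by (simp add: phia[OF i'] eexp_ennreal ennreal_minus[symmetric] ennreal_1[symmetric] del: ennreal_1)
      ultimately show "(1 - enn_exp_neg (phi i)) * emeasure mu (B i) = ennreal (m i * (1 - exp (- a i)))"
        using a0[of i] by (subst ennreal_mult) (auto simp: m_def mult.commute)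
    qed
    finally show ?thesis by simp
  qed
  finally show "(\<integral>\<^sup>+ w. enn_exp_neg (\<Sum>v\<in>V. v * of_nat (card (Phi w \<inter> g -` {v}))) \<partial>M)
          = enn_exp_neg (\<integral>\<^sup>+x. (1 - enn_exp_neg (g x)) \<partial>mu)" .
qed

lemma pgfl:
  fixes mu :: "'a measure" and Phi :: "'w \<Rightarrow> 'a set" and u :: "'a \<Rightarrow> ennreal"
  assumes M: "prob_space M" and PPP: "is_PPP M Phi mu" and sp: "space mu = UNIV"
    and E: "incseq E" "\<And>i. E i \<in> sets mu" "\<And>i. emeasure mu (E i) < \<infinity>" "(\<Union>i. E i) = UNIV"
    and u: "u \<in> borel_measurable mu"
  shows "(\<integral>\<^sup>+ w. enn_exp_neg (\<integral>\<^sup>+x. u x * indicator (Phi w) x \<partial>count_space UNIV) \<partial>M)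
       = enn_exp_neg (\<integral>\<^sup>+x. (1 - enn_exp_neg (u x)) \<partial>mu)"
proof -
  interpret prob_space M by fact
  obtain f where f: "\<And>i. simple_function mu (f i)" "incseq f" "\<And>i x. f i x < top" "\<And>x. (SUP i. f i x) = u x"
    using borel_measurable_implies_simple_function_sequence'[OF u] by blast
  define g where "g i x = f i x * indicator (E i) x" for i x
  have gs: "simple_function mu (g i)" for i
    unfolding g_def by (intro simple_function_mult f simple_function_indicator E)
  have gfin: "g i x < top" for i x
    using f(3)[of i x] by (auto simp: g_def indicator_def)
  have g0: "x \<notin> E i \<Longrightarrow> g i x = 0" for i x by (simp add: g_def)
  have ginc: "g i x \<le> g j x" if "i \<le> j" for i j x
  proof -
    have "f i x \<le> f j x" using f(2) that by (auto simp: incseq_def le_fun_def)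
    moreover have "indicator (E i) x \<le> (indicator (E j) x :: ennreal)"
      using E(1) that by (auto simp: incseq_def indicator_def)
    ultimately show ?thesis unfolding g_def by (intro mult_mono) auto
  qed
  have gSUP: "(SUP i. g i x) = u x" for x
  proof -
    obtain j where j: "x \<in> E j" using E(4) by auto
    have "(SUP i. g i x) \<le> (SUP i. f i x)"
      by (intro SUP_mono) (auto simp: g_def indicator_def)
    moreover have "(SUP i. f i x) \<le> (SUP i. g i x)"
    proof (intro SUP_least)
      fix i
      have "E j \<subseteq> E (max i j)" using E(1) unfolding incseq_def by simp
      with j have "x \<in> E (max i j)" by blast
      then have "g (max i j) x = f (max i j) x" by (simp add: g_def)
      moreover have "f i x \<le> f (max i j) x"
        using f(2) unfolding incseq_def le_fun_def by simp
      ultimately have "f i x \<le> g (max i j) x" by simp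
      also have "\<dots> \<le> (SUP i. g i x)" by (rule SUP_upper) auto
      finally show "f i x \<le> (SUP i. g i x)" .
    qed
    ultimately show ?thesis using f(4)[of x] by simp
  qed
  define V where "V i = g i ` UNIV - {0}" for i
  define S where "S i w = (\<Sum>v\<in>V i. v * of_nat (card (Phi w \<inter> g i -` {v})))" for i w
  note simp_i = pgfl_simple[OF M PPP sp gs gfin E(2) E(3) g0]
  have AES: "AE w in M. \<forall>i. (\<integral>\<^sup>+x. g i x * indicator (Phi w) x \<partial>count_space UNIV) = S i w"
    unfolding AE_all_countable S_def V_def using simp_i(1) by blast
  have Smeas[measurable]: "S i \<in> borel_measurable M" for i
    unfolding S_def V_def using simp_i(2) by blast
  have Sint: "(\<integral>\<^sup>+ w. enn_exp_neg (S i w) \<partial>M) = enn_exp_neg (\<integral>\<^sup>+x. (1 - enn_exp_neg (g i x)) \<partial>mu)" for i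
    unfolding S_def V_def using simp_i(3) by blast
  have Nsup: "(\<integral>\<^sup>+x. u x * indicator (Phi w) x \<partial>count_space UNIV)
      = (SUP i. \<integral>\<^sup>+x. g i x * indicator (Phi w) x \<partial>count_space UNIV)" for w
  proof -
    have "(\<integral>\<^sup>+x. u x * indicator (Phi w) x \<partial>count_space UNIV)
        = (\<integral>\<^sup>+x. (SUP i. g i x * indicator (Phi w) x) \<partial>count_space UNIV)"
      by (intro nn_integral_cong) (simp add: gSUP[symmetric] SUP_mult_right_ennreal)
    also have "\<dots> = (SUP i. \<integral>\<^sup>+x. g i x * indicator (Phi w) x \<partial>count_space UNIV)"
      by (rule nn_integral_monotone_convergence_SUP)
         (auto simp: incseq_def le_fun_def intro!: mult_right_mono ginc)
    finally show ?thesis .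
  qed
  have Ninc: "incseq (\<lambda>i. \<integral>\<^sup>+x. g i x * indicator (Phi w) x \<partial>count_space UNIV)" for w
    by (auto simp: incseq_def intro!: nn_integral_mono mult_right_mono ginc)
  have "(\<integral>\<^sup>+ w. enn_exp_neg (\<integral>\<^sup>+x. u x * indicator (Phi w) x \<partial>count_space UNIV) \<partial>M)
      = (\<integral>\<^sup>+ w. (INF i. enn_exp_neg (S i w)) \<partial>M)"
  proof (rule nn_integral_cong_AE)
    show "AE w in M. enn_exp_neg (\<integral>\<^sup>+x. u x * indicator (Phi w) x \<partial>count_space UNIV) = (INF i. enn_exp_neg (S i w))"
      using AES
    proof (rule AE_mp, intro AE_I2 impI)
      fix w assume "\<forall>i. (\<integral>\<^sup>+x. g i x * indicator (Phi w) x \<partial>count_space UNIV) = S i w"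
      then show "enn_exp_neg (\<integral>\<^sup>+x. u x * indicator (Phi w) x \<partial>count_space UNIV) = (INF i. enn_exp_neg (S i w))"
        using eexp_SUP[OF Ninc[of w]] unfolding Nsup by simp
    qed
  qed
  also have "\<dots> = (INF i. \<integral>\<^sup>+ w. enn_exp_neg (S i w) \<partial>M)"
  proof (rule nn_integral_monotone_convergence_INF_AE')
    show "AE w in M. enn_exp_neg (S (Suc i) w) \<le> enn_exp_neg (S i w)" for i
      using AES
    proof (rule AE_mp, intro AE_I2 impI)
      fix w assume "\<forall>i. (\<integral>\<^sup>+x. g i x * indicator (Phi w) x \<partial>count_space UNIV) = S i w"
      then show "enn_exp_neg (S (Suc i) w) \<le> enn_exp_neg (S i w)"
      proof -
        assume eq: "\<forall>i. (\<integral>\<^sup>+x. g i x * indicator (Phi w) x \<partial>count_space UNIV) = S i w"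
        have "S i w \<le> S (Suc i) w" using incseq_SucD[OF Ninc[of w], of i] eq by simp
        then show ?thesis by (rule eexp_antimono)
      qed
    qed
    show "(\<lambda>w. enn_exp_neg (S i w)) \<in> borel_measurable M" for i by measurable
    have "(\<integral>\<^sup>+ w. enn_exp_neg (S 0 w) \<partial>M) \<le> (\<integral>\<^sup>+ w. 1 \<partial>M)"
      by (intro nn_integral_mono eexp_le1)
    also have "\<dots> < \<infinity>" using emeasure_space_1 by simp
    finally show "(\<integral>\<^sup>+ w. enn_exp_neg (S 0 w) \<partial>M) < \<infinity>" .
  qed
  also have "\<dots> = (INF i. enn_exp_neg (\<integral>\<^sup>+x. (1 - enn_exp_neg (g i x)) \<partial>mu))"
    by (simp add: Sint)
  also have "\<dots> = enn_exp_neg (SUP i. \<integral>\<^sup>+x. (1 - enn_exp_neg (g i x)) \<partial>mu)"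
    by (rule eexp_SUP[symmetric])
       (unfold incseq_def, intro allI impI nn_integral_mono ennreal_minus_mono order_refl eexp_antimono ginc)
  also have "(SUP i. \<integral>\<^sup>+x. (1 - enn_exp_neg (g i x)) \<partial>mu) = (\<integral>\<^sup>+x. (SUP i. 1 - enn_exp_neg (g i x)) \<partial>mu)"
  proof (rule nn_integral_monotone_convergence_SUP[symmetric])
    show "incseq (\<lambda>i x. 1 - enn_exp_neg (g i x))"
      unfolding incseq_def le_fun_def by (intro allI impI ennreal_minus_mono order_refl eexp_antimono ginc)
    have [measurable]: "g i \<in> borel_measurable mu" for i
      by (rule borel_measurable_simple_function[OF gs])
    show "(\<lambda>x. 1 - enn_exp_neg (g i x)) \<in> borel_measurable mu" for i by measurable
  qed
  also have "(\<integral>\<^sup>+x. (SUP i. 1 - enn_exp_neg (g i x)) \<partial>mu) = (\<integral>\<^sup>+x. (1 - enn_exp_neg (u x)) \<partial>mu)"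
  proof (rule nn_integral_cong)
    fix x
    have inc: "incseq (\<lambda>i. g i x)" by (auto simp: incseq_def intro: ginc)
    show "(SUP i. 1 - enn_exp_neg (g i x)) = 1 - enn_exp_neg (u x)"
      unfolding ennreal_INF_const_minus[OF UNIV_not_empty] eexp_SUP[OF inc, symmetric] gSUP ..
  qed
  finally show ?thesis .
qed

lemma meas_sigma_vimage:
  assumes f: "f \<in> \<Omega> \<rightarrow> space N" and sub: "sets (vimage_algebra \<Omega> f N) \<subseteq> G" and G: "G \<subseteq> Pow \<Omega>"
  shows "f \<in> measurable (sigma \<Omega> G) N"
proof -
  have "f \<in> measurable (vimage_algebra \<Omega> f N) N" by (rule measurable_vimage_algebra1[OF f])
  moreover have "sets (vimage_algebra \<Omega> f N) \<subseteq> sets (sigma \<Omega> G)"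
    using sub G by (auto simp: sets_measure_of intro: sigma_sets.Basic)
  ultimately show ?thesis
    using measurable_mono[of N N "vimage_algebra \<Omega> f N" "sigma \<Omega> G"]
    by (auto simp: space_measure_of_conv)
qed

lemma vimage_sets_events:
  assumes "F \<in> measurable M N"
  shows "sets (vimage_algebra (space M) F N) \<subseteq> sets M"
  using assms by (auto simp: sets_vimage_algebra2 measurable_def)

lemma Int_stable_sets: "Int_stable (sets N)"
  by (auto simp: Int_stable_def)

lemma (in prob_space) indep_vars_grouped:
  fixes S :: "'i \<Rightarrow> 'a set set" and I :: "'j \<Rightarrow> 'i set"
  assumes ind: "indep_sets S UNIV"
    and Sev: "\<And>i. S i \<subseteq> events" and Sint: "\<And>i. Int_stable (S i)"
    and disj: "disjoint_family_on I J"
    and X: "\<And>j. j \<in> J \<Longrightarrow> X j \<in> measurable (sigma (space M) (\<Union>i\<in>I j. S i)) (N j)"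
  shows "indep_vars N X J"
  unfolding indep_vars_def2
proof (intro conjI ballI)
  have sub: "(\<Union>i\<in>I j. S i) \<subseteq> Pow (space M)" for j
    using Sev sets.sets_into_space by blast
  have sub2: "sigma_sets (space M) (\<Union>i\<in>I j. S i) \<subseteq> events" for j
    using Sev by (intro sets.sigma_sets_subset) auto
  fix j assume j: "j \<in> J"
  show "random_variable (N j) (X j)"
    by (rule measurable_from_subalg[OF _ X[OF j]])
       (auto simp: subalgebra_def space_measure_of_conv sets_measure_of[OF sub] sub2)
next
  have sub: "(\<Union>i\<in>I j. S i) \<subseteq> Pow (space M)" for j
    using Sev sets.sets_into_space by blast
  have "indep_sets (\<lambda>j. sigma_sets (space M) (\<Union>i\<in>I j. S i)) J"
    by (rule indep_sets_collect_sigma[OF indep_sets_mono_index[OF _ ind] Sint disj]) auto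
  then show "indep_sets (\<lambda>i. {X i -` A \<inter> space M |A. A \<in> sets (N i)}) J"
  proof (rule indep_sets_mono_sets)
    fix j assume j: "j \<in> J"
    show "{X j -` A \<inter> space M |A. A \<in> sets (N j)} \<subseteq> sigma_sets (space M) (\<Union>i\<in>I j. S i)"
      using measurable_sets[OF X[OF j]]
      by (auto simp: space_measure_of_conv sets_measure_of[OF sub])
  qed
qed

lemma (in prob_space) indep_integral2:
  assumes A: "A \<in> measurable M MA" and B: "B \<in> measurable M MB"
    and ind: "\<And>a b. a \<in> sets MA \<Longrightarrow> b \<in> sets MB \<Longrightarrow>
       prob ((A -` a \<inter> space M) \<inter> (B -` b \<inter> space M)) = prob (A -` a \<inter> space M) * prob (B -` b \<inter> space M)"
    and F: "F \<in> borel_measurable (MA \<Otimes>\<^sub>M MB)"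
  shows "(\<integral>\<^sup>+ w. F (A w, B w) \<partial>M) = (\<integral>\<^sup>+ a. (\<integral>\<^sup>+ w. F (a, B w) \<partial>M) \<partial>distr M MA A)"
proof -
  have XY: "(\<lambda>x. (A x, B x)) \<in> measurable M (MA \<Otimes>\<^sub>M MB)" using A B by (rule measurable_Pair)
  interpret XA: prob_space "distr M MA A" by (rule prob_space_distr) fact
  interpret XB: prob_space "distr M MB B" by (rule prob_space_distr) fact
  interpret XY: pair_prob_space "distr M MA A" "distr M MB B" ..
  have eq: "distr M MA A \<Otimes>\<^sub>M distr M MB B = distr M (MA \<Otimes>\<^sub>M MB) (\<lambda>x. (A x, B x))"
  proof (rule pair_measure_eqI)
    show "sigma_finite_measure (distr M MA A)" ..
    show "sigma_finite_measure (distr M MB B)" ..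
    fix a b assume a: "a \<in> sets (distr M MA A)" and b: "b \<in> sets (distr M MB B)"
    have "emeasure (distr M (MA \<Otimes>\<^sub>M MB) (\<lambda>x. (A x, B x))) (a \<times> b) = emeasure M ((\<lambda>x. (A x, B x)) -` (a \<times> b) \<inter> space M)"
      using a b by (intro emeasure_distr[OF XY]) auto
    also have "(\<lambda>x. (A x, B x)) -` (a \<times> b) \<inter> space M = (A -` a \<inter> space M) \<inter> (B -` b \<inter> space M)" by auto
    also have "emeasure M \<dots> = emeasure M (A -` a \<inter> space M) * emeasure M (B -` b \<inter> space M)"
      using ind[of a b] a b by (simp add: emeasure_eq_measure measure_nonneg ennreal_mult)
    also have "\<dots> = emeasure (distr M MA A) a * emeasure (distr M MB B) b"
      using A B a b by (simp add: emeasure_distr)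
    finally show "emeasure (distr M MA A) a * emeasure (distr M MB B) b = emeasure (distr M (MA \<Otimes>\<^sub>M MB) (\<lambda>x. (A x, B x))) (a \<times> b)" by simp
  qed simp
  have "(\<integral>\<^sup>+ w. F (A w, B w) \<partial>M) = (\<integral>\<^sup>+ p. F p \<partial>distr M (MA \<Otimes>\<^sub>M MB) (\<lambda>x. (A x, B x)))"
    using XY F by (subst nn_integral_distr) auto
  also have "\<dots> = (\<integral>\<^sup>+ p. F p \<partial>(distr M MA A \<Otimes>\<^sub>M distr M MB B))" unfolding eq ..
  also have "\<dots> = (\<integral>\<^sup>+ a. \<integral>\<^sup>+ b. F (a, b) \<partial>distr M MB B \<partial>distr M MA A)"
    using F by (intro XB.nn_integral_fst[symmetric]) (simp cong: measurable_cong_sets)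
  also have "\<dots> = (\<integral>\<^sup>+ a. (\<integral>\<^sup>+ w. F (a, B w) \<partial>M) \<partial>distr M MA A)"
  proof (rule nn_integral_cong)
    fix a assume a: "a \<in> space (distr M MA A)"
    show "(\<integral>\<^sup>+ b. F (a, b) \<partial>distr M MB B) = (\<integral>\<^sup>+ w. F (a, B w) \<partial>M)"
      using a B F by (subst nn_integral_distr) (auto intro: measurable_Pair2)
  qed
  finally show ?thesis .
qed

lemma (in prob_space) indep2_grouped:
  fixes S :: "'i \<Rightarrow> 'a set set"
  assumes ind: "indep_sets S UNIV"
    and Sev: "\<And>i. S i \<subseteq> events" and Sint: "\<And>i. Int_stable (S i)"
    and disj: "I1 \<inter> I2 = {}"
    and A: "A \<in> measurable (sigma (space M) (\<Union>i\<in>I1. S i)) MA"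
    and B: "B \<in> measurable (sigma (space M) (\<Union>i\<in>I2. S i)) MB"
  shows "A \<in> measurable M MA" "B \<in> measurable M MB"
    "\<And>a b. a \<in> sets MA \<Longrightarrow> b \<in> sets MB \<Longrightarrow>
       prob ((A -` a \<inter> space M) \<inter> (B -` b \<inter> space M)) = prob (A -` a \<inter> space M) * prob (B -` b \<inter> space M)"
proof -
  have sub: "(\<Union>i\<in>I. S i) \<subseteq> Pow (space M)" for I
    using Sev sets.sets_into_space by blast
  have sub2: "sigma_sets (space M) (\<Union>i\<in>I. S i) \<subseteq> events" for I
    using Sev by (intro sets.sigma_sets_subset) auto
  show "A \<in> measurable M MA"
    by (rule measurable_from_subalg[OF _ A])
       (auto simp: subalgebra_def space_measure_of_conv sets_measure_of[OF sub] sub2)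
  show "B \<in> measurable M MB"
    by (rule measurable_from_subalg[OF _ B])
       (auto simp: subalgebra_def space_measure_of_conv sets_measure_of[OF sub] sub2)
  define I where "I b = (if b then I1 else I2)" for b
  have indI: "indep_sets (\<lambda>b. sigma_sets (space M) (\<Union>i\<in>I b. S i)) UNIV"
    by (rule indep_sets_collect_sigma[OF indep_sets_mono_index[OF _ ind] Sint])
       (use disj in \<open>auto simp: disjoint_family_on_def I_def\<close>)
  fix a b assume a: "a \<in> sets MA" and b: "b \<in> sets MB"
  define E where "E x = (if x then A -` a \<inter> space M else B -` b \<inter> space M)" for x
  have "E x \<in> sigma_sets (space M) (\<Union>i\<in>I x. S i)" for x
    using measurable_sets[OF A a] measurable_sets[OF B b]
    by (cases x) (auto simp: E_def I_def space_measure_of_conv sets_measure_of[OF sub])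
  then have "prob (\<Inter>x\<in>UNIV. E x) = (\<Prod>x\<in>UNIV. prob (E x))"
    by (intro indep_setsD[OF indI]) auto
  then show "prob ((A -` a \<inter> space M) \<inter> (B -` b \<inter> space M)) = prob (A -` a \<inter> space M) * prob (B -` b \<inter> space M)"
    by (simp add: UNIV_bool E_def Int_commute mult.commute)
qed

lemma exp_laplace:
  assumes M: "prob_space M" and H: "distributed M lborel Hf (exponential_density 1)" and t: "0 \<le> t"
  shows "(\<integral>\<^sup>+ w. enn_exp_neg (ennreal (t * Hf w)) \<partial>M) = ennreal (1 / (1 + t))"
proof -
  have "(\<integral>\<^sup>+ w. enn_exp_neg (ennreal (t * Hf w)) \<partial>M)
      = (\<integral>\<^sup>+ x. ennreal (exponential_density 1 x) * enn_exp_neg (ennreal (t * x)) \<partial>lborel)"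
    by (rule distributed_nn_integral[OF H, symmetric]) measurable
  also have "\<dots> = (\<integral>\<^sup>+ x. ennreal (1 / (1 + t)) * ennreal (exponential_density (1 + t) x) \<partial>lborel)"
  proof (rule nn_integral_cong)
    fix x :: real
    show "ennreal (exponential_density 1 x) * enn_exp_neg (ennreal (t * x))
        = ennreal (1 / (1 + t)) * ennreal (exponential_density (1 + t) x)"
    proof (cases "x < 0")
      case True then show ?thesis by (simp add: exponential_density_def)
    next
      case False
      then have "0 \<le> t * x" using t by simp
      then have "enn_exp_neg (ennreal (t * x)) = ennreal (exp (- (t * x)))" by (rule eexp_ennreal)
      moreover have "exp (- x * 1) * exp (- (t * x)) = 1 / (1 + t) * ((1 + t) * exp (- x * (1 + t)))"
      proof -
        have "exp (- x * 1) * exp (- (t * x)) = exp (- x * (1 + t))"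
          by (simp add: exp_add[symmetric] algebra_simps)
        moreover have "1 / (1 + t) * ((1 + t) * E) = E" for E using t by simp
        ultimately show ?thesis by simp
      qed
      ultimately show ?thesis using False t
        by (simp add: exponential_density_def ennreal_mult[symmetric])
    qed
  qed
  also have "\<dots> = ennreal (1 / (1 + t)) * (\<integral>\<^sup>+ x. ennreal (exponential_density (1 + t) x) \<partial>lborel)"
    by (rule nn_integral_cmult) measurable
  also have "(\<integral>\<^sup>+ x. ennreal (exponential_density (1 + t) x) \<partial>lborel) = 1"
  proof -
    interpret P: prob_space "density lborel (exponential_density (1 + t))"
      by (rule prob_space_exponential_density) (use t in simp)
    have "emeasure (density lborel (exponential_density (1 + t))) UNIV = 1"
      using P.emeasure_space_1 by simp
    then show ?thesis by (simp add: emeasure_density)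
  qed
  finally show ?thesis by simp
qed

lemma sum_lessThan_suminf:
  fixes a :: "nat \<Rightarrow> ennreal"
  shows "(\<Sum>j<n. a j) = (\<Sum>j. if j < n then a j else 0)"
proof -
  have "(\<Sum>j. if j < n then a j else 0) = (\<Sum>j<n. if j < n then a j else 0)"
    by (rule suminf_finite) auto
  then show ?thesis by simp
qed

locale model =
  fixes M :: "'w measure"
    and lam_pb cbar D \<beta> \<eta> g Pc \<alpha>1 \<alpha>2 s :: real
    and f :: "real \<Rightarrow> real"
    and z :: "real^2"
    and Y :: "nat \<Rightarrow> 'w \<Rightarrow> real^2"
    and K :: "nat \<Rightarrow> 'w \<Rightarrow> nat"
    and V :: "nat \<Rightarrow> nat \<Rightarrow> 'w \<Rightarrow> real^2"
    and h :: "nat \<Rightarrow> nat \<Rightarrow> 'w \<Rightarrow> real"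
  assumes M: "prob_space M"
    and params: "lam_pb > 0" "cbar > 0" "0 < D" "D \<le> 1" "0 < \<beta>" "\<beta> \<le> 1"
                "\<eta> > 0" "g > 0" "Pc > 0" "\<alpha>1 > 0" "\<alpha>2 > 0"
    and f_choice: "(\<exists>a>0. f = matern_f a) \<or> (\<exists>\<sigma>>0. f = thomas_f \<sigma>)"
    and s_nonneg: "s \<ge> 0"
    and Y_meas: "\<And>k. Y k \<in> borel_measurable M"
    and Y_inj: "AE w in M. inj (\<lambda>k. Y k w)"
    and Y_PPP: "is_PPP M (\<lambda>w. range (\<lambda>k. Y k w)) (density lborel (\<lambda>_. ennreal lam_pb))"
    and K_meas: "\<And>k. K k \<in> measurable M (count_space UNIV)"
    and V_meas: "\<And>k j. V k j \<in> borel_measurable M"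
    and V_inj: "\<And>k. AE w in M. inj_on (\<lambda>j. V k j w) {..<K k w}"
    and V_PPP: "\<And>k. is_PPP M (\<lambda>w. (\<lambda>j. V k j w) ` {..<K k w})
                   (density lborel (\<lambda>x. ennreal (cbar * D * f (norm x))))"
    and h_exp: "\<And>k j. distributed M lborel (h k j) (exponential_density 1)"
    and indep: "prob_space.indep_sets M
        (\<lambda>i. case i of
            Par \<Rightarrow> sets (vimage_algebra (space M) (\<lambda>w k. Y k w) (Pi\<^sub>M UNIV (\<lambda>_. borel)))
          | Clu k \<Rightarrow> sets (vimage_algebra (space M) (\<lambda>w. (K k w, \<lambda>j. V k j w))
                       (count_space UNIV \<Otimes>\<^sub>M Pi\<^sub>M UNIV (\<lambda>_. borel)))
          | Fad k j \<Rightarrow> sets (vimage_algebra (space M) (h k j) borel)) UNIV"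

lemma measurable_fun_UNIV:
  "(\<And>i. X i \<in> measurable N (Mi i)) \<Longrightarrow> (\<lambda>w i. X i w) \<in> measurable N (Pi\<^sub>M UNIV Mi)"
  using measurable_restrict[of UNIV X N Mi] by (simp add: restrict_def)

sublocale model \<subseteq> prob_space M by (rule M)

context model begin

abbreviation "CSp \<equiv> (count_space UNIV \<Otimes>\<^sub>M Pi\<^sub>M UNIV (\<lambda>_::nat. borel)) :: (nat \<times> (nat \<Rightarrow> real^2)) measure"
abbreviation "HSp \<equiv> Pi\<^sub>M UNIV (\<lambda>_::nat. borel) :: (nat \<Rightarrow> real) measure"
abbreviation "MSp \<equiv> CSp \<Otimes>\<^sub>M HSp"
abbreviation "PYp \<equiv> Pi\<^sub>M UNIV (\<lambda>_::nat. borel) :: (nat \<Rightarrow> real^2) measure"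

definition "SS i = (case i of
            Par \<Rightarrow> sets (vimage_algebra (space M) (\<lambda>w k. Y k w) PYp)
          | Clu k \<Rightarrow> sets (vimage_algebra (space M) (\<lambda>w. (K k w, \<lambda>j. V k j w)) CSp)
          | Fad k j \<Rightarrow> sets (vimage_algebra (space M) (h k j) borel))"

definition "Cl k w = (K k w, \<lambda>j. V k j w)"
definition "Hk k w = (\<lambda>j. h k j w)"
definition "Mk k w = (Cl k w, Hk k w)"

lemma indepS: "indep_sets SS UNIV"
  using indep unfolding SS_def[abs_def] .

lemma h_meas: "h k j \<in> borel_measurable M"
  using distributed_measurable[OF h_exp[of k j]] by simp

lemma Yv_meas: "(\<lambda>w k. Y k w) \<in> measurable M PYp"
  by (rule measurable_fun_UNIV) (rule Y_meas)

lemma Cl_meas: "Cl k \<in> measurable M CSp"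
proof -
  have "(\<lambda>w j. V k j w) \<in> measurable M (Pi\<^sub>M UNIV (\<lambda>_. borel))"
    by (rule measurable_fun_UNIV) (rule V_meas)
  then show ?thesis unfolding Cl_def[abs_def] using K_meas[of k] by (intro measurable_Pair)
qed

lemma Hk_meas: "Hk k \<in> measurable M HSp"
  unfolding Hk_def[abs_def] by (rule measurable_fun_UNIV) (rule h_meas)

lemma SS_events: "SS i \<subseteq> events"
proof (cases i)
  case Par then show ?thesis unfolding SS_def by (simp add: vimage_sets_events[OF Yv_meas])
next
  case (Clu k) then show ?thesis using vimage_sets_events[OF Cl_meas[of k]] unfolding SS_def Cl_def[abs_def] by simp
next
  case (Fad k j) then show ?thesis using vimage_sets_events[OF h_meas[of k j]]
    unfolding SS_def by simp
qed

lemma SS_Int: "Int_stable (SS i)"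
  unfolding SS_def by (cases i) (simp_all add: Int_stable_sets)

lemma gen_meas:
  assumes F: "F \<in> measurable M N" and sub: "sets (vimage_algebra (space M) F N) \<subseteq> (\<Union>i\<in>I. SS i)"
  shows "F \<in> measurable (sigma (space M) (\<Union>i\<in>I. SS i)) N"
proof -
  have "F \<in> space M \<rightarrow> space N" using measurable_space[OF F] by auto
  then show ?thesis
    by (rule meas_sigma_vimage[OF _ sub]) (use SS_events sets.sets_into_space in blast)
qed

lemma meas_Par: assumes "Par \<in> I" shows "(\<lambda>w k. Y k w) \<in> measurable (sigma (space M) (\<Union>i\<in>I. SS i)) PYp"
proof -
  have "SS Par \<subseteq> (\<Union>i\<in>I. SS i)" using assms by (rule UN_upper)
  then show ?thesis by (intro gen_meas[OF Yv_meas]) (simp add: SS_def)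
qed

lemma meas_Clu: assumes "Clu k \<in> I" shows "Cl k \<in> measurable (sigma (space M) (\<Union>i\<in>I. SS i)) CSp"
proof -
  have "SS (Clu k) \<subseteq> (\<Union>i\<in>I. SS i)" using assms by (rule UN_upper)
  then show ?thesis by (intro gen_meas[OF Cl_meas]) (simp add: SS_def Cl_def[abs_def])
qed

lemma meas_Fad: assumes "Fad k j \<in> I" shows "h k j \<in> borel_measurable (sigma (space M) (\<Union>i\<in>I. SS i))"
proof -
  have "SS (Fad k j) \<subseteq> (\<Union>i\<in>I. SS i)" using assms by (rule UN_upper)
  then show ?thesis by (intro gen_meas[OF h_meas]) (simp add: SS_def)
qed

lemma meas_Hk: assumes "range (Fad k) \<subseteq> I" shows "Hk k \<in> measurable (sigma (space M) (\<Union>i\<in>I. SS i)) HSp"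
proof -
  show ?thesis unfolding Hk_def[abs_def]
    by (rule measurable_fun_UNIV) (rule meas_Fad, use assms in blast)
qed

lemma meas_Mk: "Clu k \<in> I \<Longrightarrow> range (Fad k) \<subseteq> I \<Longrightarrow> Mk k \<in> measurable (sigma (space M) (\<Union>i\<in>I. SS i)) MSp"
  unfolding Mk_def[abs_def] using meas_Clu meas_Hk by (auto intro!: measurable_Pair)

lemmas indep_grouped = indep_vars_grouped[OF indepS SS_events SS_Int]

lemmas indep2 = indep2_grouped[OF indepS SS_events SS_Int]

lemma indep_Par_int:
  assumes F: "F \<in> borel_measurable (PYp \<Otimes>\<^sub>M Pi\<^sub>M UNIV (\<lambda>_. MSp))"
  shows "(\<integral>\<^sup>+ w. F ((\<lambda>k. Y k w), (\<lambda>k. Mk k w)) \<partial>M)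
       = (\<integral>\<^sup>+ a. (\<integral>\<^sup>+ w. F (a, (\<lambda>k. Mk k w)) \<partial>M) \<partial>distr M PYp (\<lambda>w k. Y k w))"
proof -
  have mA: "(\<lambda>w k. Y k w) \<in> measurable (sigma (space M) (\<Union>i\<in>{Par}. SS i)) PYp"
    by (rule meas_Par) auto
  have mB: "(\<lambda>w k. Mk k w) \<in> measurable (sigma (space M) (\<Union>i\<in>- {Par}. SS i)) (Pi\<^sub>M UNIV (\<lambda>_. MSp))"
    by (rule measurable_fun_UNIV) (rule meas_Mk, auto)
  have disj: "{Par} \<inter> - {Par} = {}" by simp
  note I = indep2[OF disj mA mB]
  show ?thesis by (rule indep_integral2[OF I(1) I(2) I(3) F])
qed

lemma indep_ClH_int:
  assumes F: "F \<in> borel_measurable (CSp \<Otimes>\<^sub>M HSp)"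
  shows "(\<integral>\<^sup>+ w. F (Cl k w, Hk k w) \<partial>M)
       = (\<integral>\<^sup>+ a. (\<integral>\<^sup>+ w. F (a, Hk k w) \<partial>M) \<partial>distr M CSp (Cl k))"
proof -
  have mA: "Cl k \<in> measurable (sigma (space M) (\<Union>i\<in>{Clu k}. SS i)) CSp"
    by (rule meas_Clu) auto
  have mB: "Hk k \<in> measurable (sigma (space M) (\<Union>i\<in>range (Fad k). SS i)) HSp"
    by (rule meas_Hk) auto
  have disj: "{Clu k} \<inter> range (Fad k) = {}" by auto
  note I = indep2[OF disj mA mB]
  show ?thesis by (rule indep_integral2[OF I(1) I(2) I(3) F])
qed

lemma indep_Mk: "indep_vars (\<lambda>_. MSp) Mk UNIV"
proof (rule indep_grouped[where I="\<lambda>k. insert (Clu k) (range (Fad k))"])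
  show "disjoint_family_on (\<lambda>k. insert (Clu k) (range (Fad k))) UNIV"
    by (auto simp: disjoint_family_on_def)
  fix k show "Mk k \<in> measurable (sigma (space M) (\<Union>i\<in>insert (Clu k) (range (Fad k)). SS i)) MSp"
    by (rule meas_Mk) auto
qed

lemma indep_h: "indep_vars (\<lambda>_. borel) (h k) UNIV"
proof (rule indep_grouped[where I="\<lambda>j. {Fad k j}"])
  show "disjoint_family_on (\<lambda>j. {Fad k j}) UNIV"
    by (auto simp: disjoint_family_on_def)
  fix j show "h k j \<in> borel_measurable (sigma (space M) (\<Union>i\<in>{Fad k j}. SS i))"
    by (rule meas_Fad) auto
qed

end

lemma ell_meas[measurable]: "ell a b c \<in> borel_measurable borel"
  unfolding ell_def[abs_def] by measurable

context model begin

definition "tm y v hv = ennreal (\<beta> * ell Pc \<beta> D (\<eta> * g * norm v powr (- \<alpha>1)) * hv * norm (y + v - z) powr (- \<alpha>2))"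
definition "T y m = (\<Sum>j<fst (fst m). tm y (snd (fst m) j) (snd m j))"
definition "cc y x = \<beta> * ell Pc \<beta> D (\<eta> * g * norm x powr (- \<alpha>1)) * norm (y + x - z) powr (- \<alpha>2)"
definition "uu y x = ennreal (ln (1 + s * cc y x))"
definition "dV x = ennreal (cbar * D * f (norm x))"
definition "Q y = (\<integral>\<^sup>+x. dV x * (1 - enn_exp_neg (uu y x)) \<partial>lborel)"

lemma tm_meas[measurable]: "(\<lambda>p. tm (fst p) (fst (snd p)) (snd (snd p))) \<in> borel_measurable (borel \<Otimes>\<^sub>M (borel \<Otimes>\<^sub>M borel))"
  unfolding tm_def by measurable

lemma T_suminf: "T y m = (\<Sum>j. if j < fst (fst m) then tm y (snd (fst m) j) (snd m j) else 0)"
  unfolding T_def by (rule sum_lessThan_suminf)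

lemma T_meas: "(\<lambda>p. T (fst p) (snd p)) \<in> borel_measurable (borel \<Otimes>\<^sub>M MSp)"
proof -
  have m1: "(\<lambda>x. fst (fst (snd x))) \<in> measurable (borel \<Otimes>\<^sub>M MSp) (count_space UNIV)"
    by measurable
  have m2: "(\<lambda>x. snd (fst (snd x)) j) \<in> borel_measurable (borel \<Otimes>\<^sub>M MSp)" for j
    by measurable
  have m3: "(\<lambda>x. snd (snd x) j) \<in> borel_measurable (borel \<Otimes>\<^sub>M MSp)" for j
    by measurable
  have m4: "(\<lambda>x. fst x) \<in> borel_measurable (borel \<Otimes>\<^sub>M MSp)"
    by measurable
  have tmj: "(\<lambda>x. tm (fst x) (snd (fst (snd x)) j) (snd (snd x) j)) \<in> borel_measurable (borel \<Otimes>\<^sub>M MSp)" for j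
    using measurable_compose[OF measurable_Pair[OF m4 measurable_Pair[OF m2 m3]] tm_meas] by simp
  have pj: "{x \<in> space (borel \<Otimes>\<^sub>M MSp). j < fst (fst (snd x))} \<in> sets (borel \<Otimes>\<^sub>M MSp)" for j
    using measurable_sets[OF m1, of "{j<..}"] by (simp add: vimage_def Int_def conj_commute)
  show ?thesis unfolding T_suminf
    by (intro borel_measurable_suminf_order measurable_If tmj pj measurable_const) simp
qed


lemma f_props: "(\<forall>r. 0 \<le> f r) \<and> (\<exists>C. \<forall>r. f r \<le> C) \<and> f \<in> borel_measurable borel"
  using f_choice
proof
  assume "\<exists>a>0. f = matern_f a"
  then obtain a where a: "a > 0" "f = matern_f a" by blast
  have "\<forall>r. f r \<le> 1 / (pi * a\<^sup>2)" using a by (simp add: matern_f_def)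
  moreover have "f \<in> borel_measurable borel" unfolding a matern_f_def[abs_def] by measurable
  ultimately show ?thesis using a by (auto simp: matern_f_def)
next
  assume "\<exists>\<sigma>>0. f = thomas_f \<sigma>"
  then obtain \<sigma> where a: "\<sigma> > 0" "f = thomas_f \<sigma>" by blast
  have "f r \<le> 1 / (2 * pi * \<sigma>\<^sup>2)" for r
  proof -
    have e: "exp (- (r\<^sup>2 / (2 * \<sigma>\<^sup>2))) \<le> 1" using a by simp
    have p: "0 < 2 * pi * \<sigma>\<^sup>2" using a by simp
    show ?thesis using divide_right_mono[OF e, of "2 * pi * \<sigma>\<^sup>2"] p a by (simp add: thomas_f_def)
  qed
  moreover have "f \<in> borel_measurable borel" unfolding a thomas_f_def[abs_def] by measurable
  ultimately show ?thesis using a by (auto simp: thomas_f_def)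
qed

lemma f_nonneg: "0 \<le> f r" using f_props by blast
lemma f_meas[measurable]: "f \<in> borel_measurable borel" using f_props by blast
lemma f_bound: obtains C where "\<And>r. f r \<le> C" "0 \<le> C"
  using f_props f_nonneg by (meson order_trans)

lemma dV_meas[measurable]: "dV \<in> borel_measurable borel"
  unfolding dV_def[abs_def] by measurable

lemma ell_nonneg: "0 \<le> P \<Longrightarrow> 0 \<le> ell Pc \<beta> D P"
  by (simp add: ell_def)

lemma cc_nonneg: "0 \<le> cc y x"
  unfolding cc_def using params by (auto intro!: mult_nonneg_nonneg ell_nonneg)

lemma cc_meas[measurable]: "(\<lambda>p. cc (fst p) (snd p)) \<in> borel_measurable (borel \<Otimes>\<^sub>M borel)"
  unfolding cc_def by measurable

lemma uu_meas[measurable]: "(\<lambda>p. uu (fst p) (snd p)) \<in> borel_measurable (borel \<Otimes>\<^sub>M borel)"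
  unfolding uu_def by measurable

lemma uu_meas2[measurable]: "uu y \<in> borel_measurable borel"
  using measurable_compose_Pair1[OF _ uu_meas, of y] by simp

lemma tm_eq: "tm y v hv = ennreal (cc y v * hv)"
  unfolding tm_def cc_def by (simp add: ac_simps)

lemma eexp_uu: "enn_exp_neg (uu y x) = ennreal (1 / (1 + s * cc y x))"
proof -
  have t: "0 \<le> s * cc y x" using s_nonneg cc_nonneg by simp
  then have "0 \<le> ln (1 + s * cc y x)" by simp
  then have "enn_exp_neg (uu y x) = ennreal (exp (- ln (1 + s * cc y x)))"
    unfolding uu_def by (rule eexp_ennreal)
  also have "exp (- ln (1 + s * cc y x)) = 1 / (1 + s * cc y x)"
    using t by (simp add: exp_minus inverse_eq_divide)
  finally show ?thesis .
qed

lemma A1: "(\<integral>\<^sup>+ w. enn_exp_neg (ennreal s * T y ((n, v), Hk k w)) \<partial>M) = enn_exp_neg (\<Sum>j<n. uu y (v j))"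
proof -
  define t where "t j = s * cc y (v j)" for j
  have t0: "0 \<le> t j" for j unfolding t_def using s_nonneg cc_nonneg by simp
  have eq: "ennreal s * T y ((n, v), Hk k w) = (\<Sum>j<n. ennreal (t j * h k j w))" for w
    unfolding T_def Hk_def t_def using s_nonneg
    by (simp add: sum_distrib_left tm_eq ennreal_mult'[symmetric] mult.assoc)
  have ind: "indep_vars (\<lambda>_. borel) (\<lambda>j w. enn_exp_neg (ennreal (t j * h k j w))) {..<n}"
    by (rule indep_vars_subset[OF indep_vars_compose2[OF indep_h, of "\<lambda>j x. enn_exp_neg (ennreal (t j * x))"]]) auto
  have "(\<integral>\<^sup>+ w. enn_exp_neg (ennreal s * T y ((n, v), Hk k w)) \<partial>M)
      = (\<integral>\<^sup>+ w. (\<Prod>j<n. enn_exp_neg (ennreal (t j * h k j w))) \<partial>M)"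
    unfolding eq eexp_sum ..
  also have "\<dots> = (\<Prod>j<n. \<integral>\<^sup>+ w. enn_exp_neg (ennreal (t j * h k j w)) \<partial>M)"
    by (rule indep_vars_nn_integral[OF _ ind]) auto
  also have "\<dots> = (\<Prod>j<n. ennreal (1 / (1 + t j)))"
    by (intro prod.cong refl exp_laplace[OF M h_exp t0])
  also have "\<dots> = (\<Prod>j<n. enn_exp_neg (uu y (v j)))"
    by (simp add: eexp_uu t_def)
  also have "\<dots> = enn_exp_neg (\<Sum>j<n. uu y (v j))" by (simp add: eexp_sum)
  finally show ?thesis .
qed

end

lemma sum_fst_meas:
  fixes F :: "nat \<Rightarrow> 'b \<Rightarrow> ennreal"
  assumes F: "\<And>j. F j \<in> borel_measurable N"
  shows "(\<lambda>p. \<Sum>j<fst p. F j (snd p)) \<in> borel_measurable (count_space UNIV \<Otimes>\<^sub>M N)"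
proof -
  have m1: "(\<lambda>x. fst x) \<in> measurable (count_space UNIV \<Otimes>\<^sub>M N) (count_space UNIV)" by measurable
  have pj: "{x \<in> space (count_space UNIV \<Otimes>\<^sub>M N). j < fst x} \<in> sets (count_space UNIV \<Otimes>\<^sub>M N)" for j
    using measurable_sets[OF m1, of "{j<..}"] by (simp add: vimage_def Int_def conj_commute)
  have Fj: "(\<lambda>x. F j (snd x)) \<in> borel_measurable (count_space UNIV \<Otimes>\<^sub>M N)" for j
  proof -
    note [measurable] = F[of j]
    show ?thesis by measurable
  qed
  show ?thesis unfolding sum_lessThan_suminf
    by (intro borel_measurable_suminf_order measurable_If Fj pj measurable_const) simp
qed

lemma PPP_sets_density: "sets (density lborel d) = sets borel" by simp

lemma pgfl_density:
  fixes d :: "real^2 \<Rightarrow> ennreal" and u :: "real^2 \<Rightarrow> ennreal"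
  assumes M: "prob_space M" and PPP: "is_PPP M Phi (density lborel d)"
    and d: "d \<in> borel_measurable borel" and C: "\<And>x. d x \<le> ennreal C"
    and u: "u \<in> borel_measurable borel"
  shows "(\<integral>\<^sup>+ w. enn_exp_neg (\<integral>\<^sup>+x. u x * indicator (Phi w) x \<partial>count_space UNIV) \<partial>M)
       = enn_exp_neg (\<integral>\<^sup>+x. d x * (1 - enn_exp_neg (u x)) \<partial>lborel)"
proof -
  have fin: "emeasure (density lborel d) (cball 0 (real i)) < \<infinity>" for i
  proof -
    have "emeasure (density lborel d) (cball 0 (real i)) = (\<integral>\<^sup>+x. d x * indicator (cball 0 (real i)) x \<partial>lborel)"
      using d by (simp add: emeasure_density)
    also have "\<dots> \<le> (\<integral>\<^sup>+x. ennreal C * indicator (cball (0::real^2) (real i)) x \<partial>lborel)"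
      by (rule nn_integral_mono) (simp add: C mult_right_mono)
    also have "\<dots> = ennreal C * emeasure lborel (cball (0::real^2) (real i))"
      by (simp add: nn_integral_cmult_indicator)
    also have "\<dots> < \<infinity>"
      using emeasure_lborel_cball_finite[of "0::real^2" "real i"]
      by (simp add: ennreal_mult_less_top less_top)
    finally show ?thesis .
  qed
  have inc: "incseq (\<lambda>i. cball (0::real^2) (real i))"
    by (auto simp: incseq_def)
  have un: "(\<Union>i. cball (0::real^2) (real i)) = UNIV"
  proof -
    have "x \<in> cball 0 (real (nat \<lceil>norm x\<rceil>))" for x :: "real^2"
      using real_nat_ceiling_ge[of "norm x"] by (simp add: dist_norm)
    then show ?thesis by blast
  qed
  have "(\<integral>\<^sup>+ w. enn_exp_neg (\<integral>\<^sup>+x. u x * indicator (Phi w) x \<partial>count_space UNIV) \<partial>M)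
       = enn_exp_neg (\<integral>\<^sup>+x. (1 - enn_exp_neg (u x)) \<partial>density lborel d)"
    by (rule pgfl[OF M PPP _ inc _ fin un]) (use u in auto)
  also have "(\<integral>\<^sup>+x. (1 - enn_exp_neg (u x)) \<partial>density lborel d) = (\<integral>\<^sup>+x. d x * (1 - enn_exp_neg (u x)) \<partial>lborel)"
    using d u by (subst nn_integral_density) auto
  finally show ?thesis .
qed

context model begin

lemma A: "(\<integral>\<^sup>+ w. enn_exp_neg (ennreal s * T y (Mk k w)) \<partial>M) = enn_exp_neg (Q y)"
proof -
  have Tm: "(\<lambda>m. T y m) \<in> borel_measurable MSp"
    using measurable_compose_Pair1[OF _ T_meas, of y] by simp
  have Fm: "(\<lambda>p. enn_exp_neg (ennreal s * T y p)) \<in> borel_measurable (CSp \<Otimes>\<^sub>M HSp)"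
    using Tm by measurable
  have Gm: "(\<lambda>cl. enn_exp_neg (\<Sum>j<fst cl. uu y (snd cl j))) \<in> borel_measurable CSp"
  proof -
    have "(\<lambda>cl. \<Sum>j<fst cl. uu y (snd cl j)) \<in> borel_measurable CSp"
      by (rule sum_fst_meas[where F="\<lambda>j v. uu y (v j)"]) measurable
    then show ?thesis by measurable
  qed
  have "(\<integral>\<^sup>+ w. enn_exp_neg (ennreal s * T y (Mk k w)) \<partial>M)
      = (\<integral>\<^sup>+ w. enn_exp_neg (ennreal s * T y (Cl k w, Hk k w)) \<partial>M)"
    by (simp add: Mk_def)
  also have "\<dots> = (\<integral>\<^sup>+ cl. (\<integral>\<^sup>+ w. enn_exp_neg (ennreal s * T y (cl, Hk k w)) \<partial>M) \<partial>distr M CSp (Cl k))"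
    by (rule indep_ClH_int[OF Fm])
  also have "\<dots> = (\<integral>\<^sup>+ cl. enn_exp_neg (\<Sum>j<fst cl. uu y (snd cl j)) \<partial>distr M CSp (Cl k))"
  proof (rule nn_integral_cong)
    fix cl :: "nat \<times> (nat \<Rightarrow> real^2)"
    show "(\<integral>\<^sup>+ w. enn_exp_neg (ennreal s * T y (cl, Hk k w)) \<partial>M) = enn_exp_neg (\<Sum>j<fst cl. uu y (snd cl j))"
      using A1[of y "fst cl" "snd cl" k] by simp
  qed
  also have "\<dots> = (\<integral>\<^sup>+ w. enn_exp_neg (\<Sum>j<K k w. uu y (V k j w)) \<partial>M)"
    using Gm Cl_meas by (subst nn_integral_distr) (auto simp: Cl_def)
  also have "\<dots> = (\<integral>\<^sup>+ w. enn_exp_neg (\<integral>\<^sup>+x. uu y x * indicator ((\<lambda>j. V k j w) ` {..<K k w}) x \<partial>count_space UNIV) \<partial>M)"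
  proof (rule nn_integral_cong_AE)
    show "AE w in M. enn_exp_neg (\<Sum>j<K k w. uu y (V k j w)) = enn_exp_neg (\<integral>\<^sup>+x. uu y x * indicator ((\<lambda>j. V k j w) ` {..<K k w}) x \<partial>count_space UNIV)"
      using V_inj[of k]
    proof (rule AE_mp, intro AE_I2 impI)
      fix w assume inj: "inj_on (\<lambda>j. V k j w) {..<K k w}"
      have "(\<integral>\<^sup>+x. uu y x * indicator ((\<lambda>j. V k j w) ` {..<K k w}) x \<partial>count_space UNIV)
          = (\<Sum>x\<in>(\<lambda>j. V k j w) ` {..<K k w}. uu y x * emeasure (count_space UNIV) {x})"
        by (rule nn_integral_indicator_finite) auto
      also have "\<dots> = (\<Sum>x\<in>(\<lambda>j. V k j w) ` {..<K k w}. uu y x)" by simp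
      also have "\<dots> = (\<Sum>j<K k w. uu y (V k j w))"
        using sum.reindex[OF inj, of "uu y"] by simp
      finally show "enn_exp_neg (\<Sum>j<K k w. uu y (V k j w)) = enn_exp_neg (\<integral>\<^sup>+x. uu y x * indicator ((\<lambda>j. V k j w) ` {..<K k w}) x \<partial>count_space UNIV)"
        by simp
    qed
  qed
  also have "\<dots> = enn_exp_neg (Q y)"
  proof -
    obtain C where C: "\<And>r. f r \<le> C" "0 \<le> C" using f_bound by blast
    have "dV x \<le> ennreal (cbar * D * C)" for x
      unfolding dV_def using params C by (intro ennreal_leI mult_left_mono) auto
    then show ?thesis unfolding Q_def
      by (intro pgfl_density[OF M V_PPP[unfolded dV_def[symmetric]]]) auto
  qed
  finally show ?thesis .
qed

end

context model begin

lemma Mk_meas: "Mk k \<in> measurable M MSp"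
  unfolding Mk_def[abs_def] using Cl_meas Hk_meas by (intro measurable_Pair)

lemma Tm_meas: "(\<lambda>m. T y m) \<in> borel_measurable MSp"
  using measurable_compose_Pair1[OF _ T_meas, of y] by simp

lemma B: "(\<integral>\<^sup>+ w. enn_exp_neg (ennreal s * (\<Sum>k. T (yv k) (Mk k w))) \<partial>M) = enn_exp_neg (\<Sum>k. Q (yv k))"
proof -
  define G where "G N w = ennreal s * (\<Sum>k<N. T (yv k) (Mk k w))" for N w
  have Gm: "(\<lambda>w. T (yv k) (Mk k w)) \<in> borel_measurable M" for k
    using measurable_compose[OF Mk_meas Tm_meas] by simp
  have Ginc: "incseq (\<lambda>N. G N w)" for w
    unfolding G_def incseq_def
    by (intro allI impI mult_left_mono sum_mono2) auto
  have Gsup: "ennreal s * (\<Sum>k. T (yv k) (Mk k w)) = (SUP N. G N w)" for w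
    unfolding G_def suminf_eq_SUP SUP_mult_left_ennreal ..
  have "(\<integral>\<^sup>+ w. enn_exp_neg (ennreal s * (\<Sum>k. T (yv k) (Mk k w))) \<partial>M)
      = (\<integral>\<^sup>+ w. (INF N. enn_exp_neg (G N w)) \<partial>M)"
    unfolding Gsup using eexp_SUP[OF Ginc] by simp
  also have "\<dots> = (INF N. \<integral>\<^sup>+ w. enn_exp_neg (G N w) \<partial>M)"
  proof (rule nn_integral_monotone_convergence_INF_decseq)
    show "decseq (\<lambda>N w. enn_exp_neg (G N w))"
    proof (rule decseq_SucI, rule le_funI)
      fix N w show "enn_exp_neg (G (Suc N) w) \<le> enn_exp_neg (G N w)"
        by (rule eexp_antimono) (rule incseq_SucD[OF Ginc])
    qed
    show "(\<lambda>w. enn_exp_neg (G N w)) \<in> borel_measurable M" for N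
      unfolding G_def using Gm by measurable
    show "(\<integral>\<^sup>+ w. enn_exp_neg (G N w) \<partial>M) < \<infinity>" for N
    proof -
      have "(\<integral>\<^sup>+ w. enn_exp_neg (G N w) \<partial>M) \<le> (\<integral>\<^sup>+ w. 1 \<partial>M)"
        by (intro nn_integral_mono eexp_le1)
      also have "\<dots> < \<infinity>" using emeasure_space_1 by simp
      finally show ?thesis .
    qed
  qed
  also have "\<dots> = (INF N. enn_exp_neg (\<Sum>k<N. Q (yv k)))"
  proof (rule INF_cong[OF refl])
    fix N
    have mk: "(\<lambda>m. enn_exp_neg (ennreal s * T (yv k) m)) \<in> borel_measurable MSp" for k
      using Tm_meas[of "yv k"] by measurable
    have ind: "indep_vars (\<lambda>_. borel) (\<lambda>k w. enn_exp_neg (ennreal s * T (yv k) (Mk k w))) {..<N}"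
      by (rule indep_vars_subset[OF indep_vars_compose2[OF indep_Mk, of "\<lambda>k m. enn_exp_neg (ennreal s * T (yv k) m)"]])
         (use mk in auto)
    have "(\<integral>\<^sup>+ w. enn_exp_neg (G N w) \<partial>M) = (\<integral>\<^sup>+ w. (\<Prod>k<N. enn_exp_neg (ennreal s * T (yv k) (Mk k w))) \<partial>M)"
      unfolding G_def sum_distrib_left eexp_sum ..
    also have "\<dots> = (\<Prod>k<N. \<integral>\<^sup>+ w. enn_exp_neg (ennreal s * T (yv k) (Mk k w)) \<partial>M)"
      by (rule indep_vars_nn_integral[OF _ ind]) auto
    also have "\<dots> = (\<Prod>k<N. enn_exp_neg (Q (yv k)))"
      by (intro prod.cong refl A)
    also have "\<dots> = enn_exp_neg (\<Sum>k<N. Q (yv k))" by (simp add: eexp_sum)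
    finally show "(\<integral>\<^sup>+ w. enn_exp_neg (G N w) \<partial>M) = enn_exp_neg (\<Sum>k<N. Q (yv k))" .
  qed
  also have "\<dots> = enn_exp_neg (SUP N. \<Sum>k<N. Q (yv k))"
    by (rule eexp_SUP[symmetric]) (auto simp: incseq_def intro!: sum_mono2)
  also have "\<dots> = enn_exp_neg (\<Sum>k. Q (yv k))" unfolding suminf_eq_SUP ..
  finally show ?thesis .
qed

lemma Q_meas[measurable]: "Q \<in> borel_measurable borel"
proof -
  have "(\<lambda>p. dV (snd p) * (1 - enn_exp_neg (uu (fst p) (snd p)))) \<in> borel_measurable (borel \<Otimes>\<^sub>M borel)"
    by measurable
  then have "(\<lambda>p. dV (snd p) * (1 - enn_exp_neg (uu (fst p) (snd p)))) \<in> borel_measurable (borel \<Otimes>\<^sub>M lborel)"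
    by (simp cong: measurable_cong_sets)
  from lborel.borel_measurable_nn_integral_fst[OF this]
  show ?thesis unfolding Q_def[abs_def] by simp
qed

lemma C: "(\<integral>\<^sup>+ w. enn_exp_neg (\<Sum>k. Q (Y k w)) \<partial>M)
    = enn_exp_neg (\<integral>\<^sup>+ y. ennreal lam_pb * (1 - enn_exp_neg (Q y)) \<partial>lborel)"
proof -
  have "(\<integral>\<^sup>+ w. enn_exp_neg (\<Sum>k. Q (Y k w)) \<partial>M)
      = (\<integral>\<^sup>+ w. enn_exp_neg (\<integral>\<^sup>+x. Q x * indicator (range (\<lambda>k. Y k w)) x \<partial>count_space UNIV) \<partial>M)"
  proof (rule nn_integral_cong_AE)
    show "AE w in M. enn_exp_neg (\<Sum>k. Q (Y k w)) = enn_exp_neg (\<integral>\<^sup>+x. Q x * indicator (range (\<lambda>k. Y k w)) x \<partial>count_space UNIV)"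
      using Y_inj
    proof (rule AE_mp, intro AE_I2 impI)
      fix w assume inj: "inj (\<lambda>k. Y k w)"
      have "(\<integral>\<^sup>+x. Q x * indicator (range (\<lambda>k. Y k w)) x \<partial>count_space UNIV)
          = (\<integral>\<^sup>+x. Q x \<partial>count_space (range (\<lambda>k. Y k w)))"
        by (rule nn_integral_count_space_indicator[symmetric]) simp
      also have "\<dots> = (\<integral>\<^sup>+k. Q (Y k w) \<partial>count_space UNIV)"
        by (rule nn_integral_bij_count_space[symmetric]) (use inj in \<open>simp add: bij_betw_def\<close>)
      also have "\<dots> = (\<Sum>k. Q (Y k w))" by (rule nn_integral_count_space_nat)
      finally show "enn_exp_neg (\<Sum>k. Q (Y k w)) = enn_exp_neg (\<integral>\<^sup>+x. Q x * indicator (range (\<lambda>k. Y k w)) x \<partial>count_space UNIV)"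
        by simp
    qed
  qed
  also have "\<dots> = enn_exp_neg (\<integral>\<^sup>+ y. ennreal lam_pb * (1 - enn_exp_neg (Q y)) \<partial>lborel)"
    by (rule pgfl_density[OF M Y_PPP]) auto
  finally show ?thesis .
qed

end

context model begin

definition "ratio y x = s * \<beta> * \<eta> * g / (s * \<beta> * \<eta> * g + norm x powr \<alpha>1 * norm (x + y - z) powr \<alpha>2)"

lemma bD_le1: "\<beta> * D \<le> 1"
  using params by (metis mult_le_one less_imp_le)

lemma regionO_mem_iff:
  assumes x: "x \<noteq> 0" and bD: "\<beta> * D < 1"
  shows "x \<in> regionO \<eta> g \<beta> D Pc \<alpha>1 \<longleftrightarrow> norm x powr \<alpha>1 \<le> \<eta> * g * (1 - \<beta> * D) / Pc"
proof -
  define L where "L = \<eta> * g * (1 - \<beta> * D) / Pc"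
  have L: "0 < L" unfolding L_def using params bD by simp
  have nx: "0 < norm x" using x by simp
  have "x \<in> regionO \<eta> g \<beta> D Pc \<alpha>1 \<longleftrightarrow> norm x \<le> L powr (1 / \<alpha>1)"
    unfolding regionO_def L_def by simp
  also have "\<dots> \<longleftrightarrow> norm x powr \<alpha>1 \<le> L"
  proof
    assume "norm x \<le> L powr (1 / \<alpha>1)"
    then have "norm x powr \<alpha>1 \<le> (L powr (1 / \<alpha>1)) powr \<alpha>1"
      using params nx by (intro powr_mono2) auto
    also have "\<dots> = L" using params L by (simp add: powr_powr)
    finally show "norm x powr \<alpha>1 \<le> L" .
  next
    assume "norm x powr \<alpha>1 \<le> L"
    then have "(norm x powr \<alpha>1) powr (1 / \<alpha>1) \<le> L powr (1 / \<alpha>1)"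
      using params nx by (intro powr_mono2) auto
    also have "(norm x powr \<alpha>1) powr (1 / \<alpha>1) = norm x" using params nx by (simp add: powr_powr)
    finally show "norm x \<le> L powr (1 / \<alpha>1)" .
  qed
  finally show ?thesis unfolding L_def .
qed

lemma ell_iff:
  assumes x: "x \<noteq> 0" and bD: "\<beta> * D < 1"
  shows "\<eta> * g * norm x powr (- \<alpha>1) \<ge> Pc / (1 - \<beta> * D) \<longleftrightarrow> norm x powr \<alpha>1 \<le> \<eta> * g * (1 - \<beta> * D) / Pc"
proof -
  define A where "A = norm x powr \<alpha>1"
  have A: "0 < A" unfolding A_def using x by simp
  have b: "0 < 1 - \<beta> * D" using bD by simp
  have "\<eta> * g * norm x powr (- \<alpha>1) = \<eta> * g / A"
    unfolding A_def by (simp add: powr_minus divide_inverse)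
  moreover have "Pc / (1 - \<beta> * D) \<le> \<eta> * g / A \<longleftrightarrow> A \<le> \<eta> * g * (1 - \<beta> * D) / Pc"
    using A b params by (simp add: divide_le_eq le_divide_eq mult.commute mult.left_commute)
  ultimately show ?thesis unfolding A_def by simp
qed

lemma D_point:
  assumes x: "x \<noteq> 0" and xy: "x + y - z \<noteq> 0"
  shows "f (norm x) * (s * cc y x / (1 + s * cc y x))
       = indicator (regionO \<eta> g \<beta> D Pc \<alpha>1) x *\<^sub>R (ratio y x * f (norm x))"
proof (cases "\<beta> * D < 1 \<and> norm x powr \<alpha>1 \<le> \<eta> * g * (1 - \<beta> * D) / Pc")
  case True
  then have bD: "\<beta> * D < 1" and inO: "x \<in> regionO \<eta> g \<beta> D Pc \<alpha>1"
    using regionO_mem_iff[OF x] by auto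
  define A where "A = norm x powr \<alpha>1"
  define B where "B = norm (x + y - z) powr \<alpha>2"
  have A: "0 < A" unfolding A_def using x by simp
  have B: "0 < B" unfolding B_def using xy by simp
  have ell: "ell Pc \<beta> D (\<eta> * g * norm x powr (- \<alpha>1)) = \<eta> * g / A"
    using True ell_iff[OF x bD] unfolding ell_def A_def by (simp add: powr_minus divide_inverse)
  have "norm (y + x - z) powr (- \<alpha>2) = 1 / B"
    unfolding B_def by (simp add: powr_minus divide_inverse add.commute)
  then have ccx: "cc y x = \<beta> * \<eta> * g / (A * B)"
    unfolding cc_def ell by simp
  have "s * cc y x / (1 + s * cc y x) = ratio y x"
    unfolding ccx ratio_def A_def[symmetric] B_def[symmetric] using A B
    by (simp add: field_simps)
  then show ?thesis using inO by simp
next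
  case False
  have ell0: "ell Pc \<beta> D (\<eta> * g * norm x powr (- \<alpha>1)) = 0"
    using False ell_iff[OF x] unfolding ell_def by auto
  have notO: "x \<notin> regionO \<eta> g \<beta> D Pc \<alpha>1"
  proof (cases "\<beta> * D < 1")
    case True then show ?thesis using False regionO_mem_iff[OF x] by auto
  next
    case False
    then have "\<beta> * D = 1" using bD_le1 by simp
    then show ?thesis using x unfolding regionO_def by simp
  qed
  show ?thesis using notO by (simp add: cc_def ell0)
qed


definition "Gq y x = indicator (regionO \<eta> g \<beta> D Pc \<alpha>1) x *\<^sub>R (ratio y x * f (norm x))"

lemma ratio_nonneg: "0 \<le> ratio y x"
  unfolding ratio_def using params s_nonneg by (intro divide_nonneg_nonneg add_nonneg_nonneg) auto

lemma ratio_le1: "ratio y x \<le> 1"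
proof -
  define a where "a = s * \<beta> * \<eta> * g"
  define b where "b = norm x powr \<alpha>1 * norm (x + y - z) powr \<alpha>2"
  have a: "0 \<le> a" unfolding a_def using params s_nonneg by simp
  have b: "0 \<le> b" unfolding b_def by simp
  have "a / (a + b) \<le> 1" using a b by (cases "a + b = 0") (auto simp: divide_le_eq)
  then show ?thesis unfolding ratio_def a_def b_def .
qed

lemma Gq_nonneg: "0 \<le> Gq y x"
  unfolding Gq_def using ratio_nonneg f_nonneg by simp

lemma regionO_eq: "regionO \<eta> g \<beta> D Pc \<alpha>1 = cball 0 ((\<eta> * g * (1 - \<beta> * D) / Pc) powr (1 / \<alpha>1))"
  unfolding regionO_def by (auto simp: dist_norm)

lemma fn_meas[measurable]: "(\<lambda>x::real^2. f (norm x)) \<in> borel_measurable borel"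
  using measurable_compose[OF borel_measurable_norm f_meas] by simp

lemma Gq_meas[measurable]: "Gq y \<in> borel_measurable borel"
  unfolding Gq_def[abs_def] ratio_def regionO_def by measurable

lemma Gq_int: "integrable lborel (Gq y)"
proof -
  obtain C where C: "\<And>r. f r \<le> C" "0 \<le> C" using f_bound by blast
  define R where "R = (\<eta> * g * (1 - \<beta> * D) / Pc) powr (1 / \<alpha>1)"
  have int: "integrable lborel (\<lambda>x. C * indicator (cball (0::real^2) R) x)"
    using emeasure_lborel_cball_finite[of "0::real^2" R] by (intro integrable_mult_right) auto
  show ?thesis
  proof (rule Bochner_Integration.integrable_bound[OF int])
    show "Gq y \<in> borel_measurable lborel" by simp
    show "AE x in lborel. norm (Gq y x) \<le> norm (C * indicator (cball (0::real^2) R) x)"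
    proof (intro AE_I2)
      fix x :: "real^2"
      have "ratio y x * f (norm x) \<le> 1 * C"
        using ratio_nonneg ratio_le1 f_nonneg C by (intro mult_mono) auto
      then show "norm (Gq y x) \<le> norm (C * indicator (cball (0::real^2) R) x)"
        using Gq_nonneg[of y x] C unfolding Gq_def regionO_eq R_def[symmetric]
        by (auto simp: indicator_def)
    qed
  qed
qed

lemma Q_eq: "Q y = ennreal (cbar * D * qfun \<eta> g \<beta> D Pc \<alpha>1 \<alpha>2 f s y z)"
proof -
  have cD: "0 \<le> cbar * D" using params by simp
  have "Q y = (\<integral>\<^sup>+x. ennreal (cbar * D * Gq y x) \<partial>lborel)"
    unfolding Q_def
  proof (rule nn_integral_cong_AE)
    have "AE x in lborel. x \<noteq> (0::real^2)" by (rule AE_lborel_singleton)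
    moreover have "AE x in lborel. x \<noteq> z - y" by (rule AE_lborel_singleton)
    ultimately show "AE x in lborel. dV x * (1 - enn_exp_neg (uu y x)) = ennreal (cbar * D * Gq y x)"
    proof eventually_elim
      case (elim x)
      then have x: "x \<noteq> 0" and xy: "x + y - z \<noteq> 0" by (auto simp: algebra_simps)
      have t: "0 \<le> s * cc y x" using s_nonneg cc_nonneg by simp
      have "1 - enn_exp_neg (uu y x) = ennreal (1 - 1 / (1 + s * cc y x))"
        unfolding eexp_uu using t by (simp add: ennreal_minus[symmetric] del: ennreal_1 flip: ennreal_1)
      also have "1 - 1 / (1 + s * cc y x) = s * cc y x / (1 + s * cc y x)"
        using t by (simp add: field_simps)
      finally have e1: "1 - enn_exp_neg (uu y x) = ennreal (s * cc y x / (1 + s * cc y x))" .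
      have a0: "0 \<le> cbar * D * f (norm x)" using cD f_nonneg by simp
      have "dV x * (1 - enn_exp_neg (uu y x)) = ennreal (cbar * D * f (norm x) * (s * cc y x / (1 + s * cc y x)))"
        unfolding dV_def e1 using ennreal_mult'[OF a0, of "s * cc y x / (1 + s * cc y x)"] by simp
      then have "dV x * (1 - enn_exp_neg (uu y x)) = ennreal (cbar * D * (f (norm x) * (s * cc y x / (1 + s * cc y x))))"
        by (simp add: mult.assoc)
      also have "\<dots> = ennreal (cbar * D * Gq y x)"
        unfolding D_point[OF x xy] Gq_def ..
      finally show ?case .
    qed
  qed
  also have "\<dots> = ennreal (cbar * D) * (\<integral>\<^sup>+x. ennreal (Gq y x) \<partial>lborel)"
    using cD by (simp add: ennreal_mult nn_integral_cmult Gq_nonneg)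
  also have "(\<integral>\<^sup>+x. ennreal (Gq y x) \<partial>lborel) = ennreal (integral\<^sup>L lborel (Gq y))"
    by (rule nn_integral_eq_integral[OF Gq_int]) (simp add: Gq_nonneg)
  also have "integral\<^sup>L lborel (Gq y) = qfun \<eta> g \<beta> D Pc \<alpha>1 \<alpha>2 f s y z"
    unfolding qfun_def set_lebesgue_integral_def Gq_def[abs_def] ratio_def ..
  finally show ?thesis using cD by (simp add: ennreal_mult')
qed

end

context model begin

lemma F_meas: "(\<lambda>p. enn_exp_neg (ennreal s * (\<Sum>k. T (fst p k) (snd p k)))) \<in> borel_measurable (PYp \<Otimes>\<^sub>M Pi\<^sub>M UNIV (\<lambda>_. MSp))"
proof -
  have "(\<lambda>p. (fst p k, snd p k)) \<in> measurable (PYp \<Otimes>\<^sub>M Pi\<^sub>M UNIV (\<lambda>_. MSp)) (borel \<Otimes>\<^sub>M MSp)" for k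
    by measurable
  from measurable_compose[OF this T_meas]
  have [measurable]: "(\<lambda>p. T (fst p k) (snd p k)) \<in> borel_measurable (PYp \<Otimes>\<^sub>M Pi\<^sub>M UNIV (\<lambda>_. MSp))" for k
    by simp
  show ?thesis by measurable
qed

lemma main:
  "(\<integral>\<^sup>+ w. enn_exp_neg (ennreal s *
            (\<Sum>k. \<Sum>j<K k w. ennreal (\<beta> * ell Pc \<beta> D (\<eta> * g * norm (V k j w) powr (- \<alpha>1))
                                 * h k j w * norm (Y k w + V k j w - z) powr (- \<alpha>2)))) \<partial>M)
         = enn_exp_neg (ennreal lam_pb *
            (\<integral>\<^sup>+ y. ennreal (1 - exp (- (cbar * D * qfun \<eta> g \<beta> D Pc \<alpha>1 \<alpha>2 f s y z))) \<partial>lborel))"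
proof -
  have "(\<integral>\<^sup>+ w. enn_exp_neg (ennreal s *
            (\<Sum>k. \<Sum>j<K k w. ennreal (\<beta> * ell Pc \<beta> D (\<eta> * g * norm (V k j w) powr (- \<alpha>1))
                                 * h k j w * norm (Y k w + V k j w - z) powr (- \<alpha>2)))) \<partial>M)
      = (\<integral>\<^sup>+ w. (\<lambda>p. enn_exp_neg (ennreal s * (\<Sum>k. T (fst p k) (snd p k)))) ((\<lambda>k. Y k w), (\<lambda>k. Mk k w)) \<partial>M)"
    by (simp add: T_def Mk_def Cl_def Hk_def tm_def)
  also have "\<dots> = (\<integral>\<^sup>+ yv. (\<integral>\<^sup>+ w. enn_exp_neg (ennreal s * (\<Sum>k. T (yv k) (Mk k w))) \<partial>M) \<partial>distr M PYp (\<lambda>w k. Y k w))"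
    using indep_Par_int[OF F_meas] by simp
  also have "\<dots> = (\<integral>\<^sup>+ yv. enn_exp_neg (\<Sum>k. Q (yv k)) \<partial>distr M PYp (\<lambda>w k. Y k w))"
    by (intro nn_integral_cong B)
  also have "\<dots> = (\<integral>\<^sup>+ w. enn_exp_neg (\<Sum>k. Q (Y k w)) \<partial>M)"
    using Yv_meas by (subst nn_integral_distr) auto
  also have "\<dots> = enn_exp_neg (\<integral>\<^sup>+ y. ennreal lam_pb * (1 - enn_exp_neg (Q y)) \<partial>lborel)"
    by (rule C)
  also have "(\<integral>\<^sup>+ y. ennreal lam_pb * (1 - enn_exp_neg (Q y)) \<partial>lborel)
      = ennreal lam_pb * (\<integral>\<^sup>+ y. (1 - enn_exp_neg (Q y)) \<partial>lborel)"
    by (rule nn_integral_cmult) measurable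
  also have "(\<integral>\<^sup>+ y. (1 - enn_exp_neg (Q y)) \<partial>lborel)
      = (\<integral>\<^sup>+ y. ennreal (1 - exp (- (cbar * D * qfun \<eta> g \<beta> D Pc \<alpha>1 \<alpha>2 f s y z))) \<partial>lborel)"
  proof (rule nn_integral_cong)
    fix y
    define r where "r = cbar * D * qfun \<eta> g \<beta> D Pc \<alpha>1 \<alpha>2 f s y z"
    show "1 - enn_exp_neg (Q y) = ennreal (1 - exp (- (cbar * D * qfun \<eta> g \<beta> D Pc \<alpha>1 \<alpha>2 f s y z)))"
      unfolding Q_eq r_def[symmetric]
    proof (cases "0 \<le> r")
      case True
      then show "1 - enn_exp_neg (ennreal r) = ennreal (1 - exp (- r))"
        by (simp add: eexp_ennreal ennreal_minus[symmetric] del: ennreal_1 flip: ennreal_1)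
    next
      case False
      then have "1 - exp (- r) \<le> 0" by simp
      then show "1 - enn_exp_neg (ennreal r) = ennreal (1 - exp (- r))"
        using False by (simp add: ennreal_neg)
    qed
  qed
  finally show ?thesis .
qed

end

theorem lemma2:
  fixes M :: "'w measure"
    and lam_pb cbar D \<beta> \<eta> g Pc \<alpha>1 \<alpha>2 s :: real
    and f :: "real \<Rightarrow> real"
    and z :: "real^2"
    and Y :: "nat \<Rightarrow> 'w \<Rightarrow> real^2"
    and K :: "nat \<Rightarrow> 'w \<Rightarrow> nat"
    and V :: "nat \<Rightarrow> nat \<Rightarrow> 'w \<Rightarrow> real^2"
    and h :: "nat \<Rightarrow> nat \<Rightarrow> 'w \<Rightarrow> real"
  assumes M: "prob_space M"
    and params: "lam_pb > 0" "cbar > 0" "0 < D" "D \<le> 1" "0 < \<beta>" "\<beta> \<le> 1"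
                "\<eta> > 0" "g > 0" "Pc > 0" "\<alpha>1 > 0" "\<alpha>2 > 0"
    and f_choice: "(\<exists>a>0. f = matern_f a) \<or> (\<exists>\<sigma>>0. f = thomas_f \<sigma>)"
    and s_nonneg: "s \<ge> 0"
    \<comment> \<open>parent process: an enumeration Y of the power beacons, forming a homogeneous PPP\<close>
    and Y_meas: "\<And>k. Y k \<in> borel_measurable M"
    and Y_inj: "AE w in M. inj (\<lambda>k. Y k w)"
    and Y_PPP: "is_PPP M (\<lambda>w. range (\<lambda>k. Y k w)) (density lborel (\<lambda>_. ennreal lam_pb))"
    \<comment> \<open>cluster k: K k points with offsets V k j (j < K k) relative to Y k, a PPP with
        intensity cbar D f(|x|) dx\<close>
    and K_meas: "\<And>k. K k \<in> measurable M (count_space UNIV)"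
    and V_meas: "\<And>k j. V k j \<in> borel_measurable M"
    and V_inj: "\<And>k. AE w in M. inj_on (\<lambda>j. V k j w) {..<K k w}"
    and V_PPP: "\<And>k. is_PPP M (\<lambda>w. (\<lambda>j. V k j w) ` {..<K k w})
                   (density lborel (\<lambda>x. ennreal (cbar * D * f (norm x))))"
    \<comment> \<open>fading: i.i.d. exponential with mean 1\<close>
    and h_exp: "\<And>k j. distributed M lborel (h k j) (exponential_density 1)"
    \<comment> \<open>mutual independence of parent process, the clusters and the fading variables\<close>
    and indep: "prob_space.indep_sets M
        (\<lambda>i. case i of
            Par \<Rightarrow> sets (vimage_algebra (space M) (\<lambda>w k. Y k w) (Pi\<^sub>M UNIV (\<lambda>_. borel)))
          | Clu k \<Rightarrow> sets (vimage_algebra (space M) (\<lambda>w. (K k w, \<lambda>j. V k j w))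
                       (count_space UNIV \<Otimes>\<^sub>M Pi\<^sub>M UNIV (\<lambda>_. borel)))
          | Fad k j \<Rightarrow> sets (vimage_algebra (space M) (h k j) borel)) UNIV"
  shows "(\<integral>\<^sup>+ w. enn_exp_neg (ennreal s *
            (\<Sum>k. \<Sum>j<K k w. ennreal (\<beta> * ell Pc \<beta> D (\<eta> * g * norm (V k j w) powr (- \<alpha>1))
                                 * h k j w * norm (Y k w + V k j w - z) powr (- \<alpha>2)))) \<partial>M)
         = enn_exp_neg (ennreal lam_pb *
            (\<integral>\<^sup>+ y. ennreal (1 - exp (- (cbar * D * qfun \<eta> g \<beta> D Pc \<alpha>1 \<alpha>2 f s y z))) \<partial>lborel))"
  proof -
  interpret model M lam_pb cbar D \<beta> \<eta> g Pc \<alpha>1 \<alpha>2 s f z Y K V h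
    by (rule model.intro) (rule assms)+
  show ?thesis by (rule main)
qed

end
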